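(* Assume $m=n$. Then $\mathcal{D}_q=\operatorname{End}_{\mathcal{C}_q}V^{\otimes r}$ is isomorphic as a $K$-algebra to the $\mathbb{Z}_2$-crossed product $(\mathcal{B}_q)^{\psi_1}_{\alpha_1}[\mathbb{Z}_2]$, via $a_1u_1+a_2u_{-1}\mapsto a_1+a_2\varphi^{\otimes r}$ ($a_1,a_2\in\mathcal{B}_q$). In particular $\dim_K\mathcal{D}_q=2\dim_K\mathcal{B}_q$.
   Context: $q$ indeterminate, $K=\mathbb{Q}(q)$, $r\ge2$. $\mathcal{H}_{K,r}(q)$ is the type $A$ Iwahori–Hecke algebra (generators $T_1,\dots,T_{r-1}$, $T_i^2=(q-q^{-1})T_i+1$, braid relations); $T'_i=\frac{2T_i-(q-q^{-1})}{q+q^{-1}}$; the Goldman involution is the algebra automorphism with $\hat T_i=(q-q^{-1})-T_i$ and $\mathcal{H}^1_{K,r}(q)=\{X:\hat X=X\}$. $V$ is $\mathbb{Z}_2$-graded with basis $v_1,\dots,v_{2m}$, $|v_k|=0$ for $k\le m$, $1$ for $k>m$. The $q$-permutation representation $\pi_r$ of $\mathcal{H}_{K,r}(q)$ on $V^{\otimes r}$ is given by $\pi_r(T'_i)=\mathrm{Id}^{\otimes i-1}\otimes T'\otimes\mathrm{Id}^{\otimes r-i-1}$ with $T'(v_k\otimes v_k)=(-1)^{|v_k|}v_k\otimes v_k$ and for $k\ne l$, $T'(v_k\otimes v_l)=\frac{2(-1)^{|v_k||v_l|}}{q+q^{-1}}v_l\otimes v_k\pm\frac{q-q^{-1}}{q+q^{-1}}v_k\otimes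 v_l$ ($+$ if $k<l$, $-$ if $k>l$). $\mathcal{A}_q=\pi_r(\mathcal{H}_{K,r}(q))$, $\mathcal{C}_q=\pi_r(\mathcal{H}^1_{K,r}(q))$, $\mathcal{B}_q=\operatorname{End}_{\mathcal{A}_q}V^{\otimes r}$, $\mathcal{D}_q=\operatorname{End}_{\mathcal{C}_q}V^{\otimes r}$. $\varphi(v_i)=v_{2m-i+1}$, $\varphi^{\otimes r}(u_1\otimes\cdots\otimes u_r)=(-1)^{\sum_{i=2}^r\sum_{j<i}|u_j|}\varphi(u_1)\otimes\cdots\otimes\varphi(u_r)$; $\omega(f)=(-1)^{r(r-1)/2}\varphi^{\otimes r}f\varphi^{\otimes r}$ is an algebra automorphism of $\mathcal{B}_q$. $\psi_1(1)=\mathrm{id}$, $\psi_1(-1)=\omega$; $\alpha_1(\sigma,\tau)=1$ if $\sigma=1$ or $\tau=1$, $\alpha_1(-1,-1)=(-1)^{r(r-1)/2}$. For a crossed system $(A,G,\psi,\alpha)$ (${}^\sigma a:=\psi(\sigma)(a)$), the crossed product $A^\psi_\alpha[G]$ is the free left $A$-module with basis $\{u_\sigma\}_{\sigma\in G}$ and multiplication $(a_1u_\sigma)(a_2u_\tau)=a_1\,{}^\sigma a_2\,\alpha(\sigma,\tau)u_{\sigma\tau}$. *)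

theory Defs
  imports Complex_Main
    "HOL-Computational_Algebra.Polynomial"
    "HOL-Computational_Algebra.Fraction_Field"
    "HOL-Combinatorics.Permutations"
    "HOL-Combinatorics.Transposition"
    "HOL-Library.Function_Algebras"
begin

section \<open>The ground field K = Q(q)\<close>

type_synonym K = "rat poly fract"

definition qq :: K where "qq = Fract [:0, 1:] 1"

definition cc :: K where "cc = qq - inverse qq"

(* f x y = coefficient of basis vector x in f(basis vector y) *)
type_synonym 'i lmap = "'i \<Rightarrow> 'i \<Rightarrow> K"

definition lin :: "'i set \<Rightarrow> 'i lmap set" where
  "lin I = {f. \<forall>x y. x \<notin> I \<or> y \<notin> I \<longrightarrow> f x y = 0}"

definition mmul :: "'i set \<Rightarrow> 'i lmap \<Rightarrow> 'i lmap \<Rightarrow> 'i lmap" where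
  "mmul I f g = (\<lambda>x y. \<Sum>z\<in>I. f x z * g z y)"

definition mid :: "'i set \<Rightarrow> 'i lmap" where
  "mid I = (\<lambda>x y. if x \<in> I \<and> x = y then 1 else 0)"

definition msc :: "K \<Rightarrow> 'i lmap \<Rightarrow> 'i lmap" where
  "msc c f = (\<lambda>x y. c * f x y)"

definition centralizer :: "'i set \<Rightarrow> 'i lmap set \<Rightarrow> 'i lmap set" where
  "centralizer I S = {f \<in> lin I. \<forall>a\<in>S. mmul I f a = mmul I a f}"

section \<open>Noncommutative polynomial expressions in the generators T_1..T_{r-1}\<close>

datatype ncpoly = Gen nat | Scal K | Plus ncpoly ncpoly | Times ncpoly ncpoly

fun ncwf :: "nat \<Rightarrow> ncpoly \<Rightarrow> bool" where
  "ncwf r (Gen i) = (1 \<le> i \<and> i < r)"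
| "ncwf r (Scal c) = True"
| "ncwf r (Plus a b) = (ncwf r a \<and> ncwf r b)"
| "ncwf r (Times a b) = (ncwf r a \<and> ncwf r b)"

fun nceval :: "'i set \<Rightarrow> (nat \<Rightarrow> 'i lmap) \<Rightarrow> ncpoly \<Rightarrow> 'i lmap" where
  "nceval I g (Gen i) = g i"
| "nceval I g (Scal c) = msc c (mid I)"
| "nceval I g (Plus a b) = nceval I g a + nceval I g b"
| "nceval I g (Times a b) = mmul I (nceval I g a) (nceval I g b)"

fun goldman :: "ncpoly \<Rightarrow> ncpoly" where
  "goldman (Gen i) = Plus (Scal cc) (Times (Scal (-1)) (Gen i))"
| "goldman (Scal c) = Scal c"
| "goldman (Plus a b) = Plus (goldman a) (goldman b)"
| "goldman (Times a b) = Times (goldman a) (goldman b)"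

section \<open>The Hecke algebra via its (faithful) left regular representation\<close>

definition Wr :: "nat \<Rightarrow> (nat \<Rightarrow> nat) set" where
  "Wr r = {w. w permutes {0..<r}}"

definition plen :: "nat \<Rightarrow> (nat \<Rightarrow> nat) \<Rightarrow> nat" where
  "plen r w = card {(i, j). i < j \<and> j < r \<and> w j < w i}"

(* s_i, 1 <= i <= r-1, swaps positions i-1 and i (0-indexed) *)
definition sgen :: "nat \<Rightarrow> nat \<Rightarrow> nat" where
  "sgen i = Transposition.transpose (i - 1) i"

(* left multiplication by T_i on the standard basis T_w of H_{K,r}(q) *)
definition regL :: "nat \<Rightarrow> nat \<Rightarrow> (nat \<Rightarrow> nat) lmap" where
  "regL r i = (\<lambda>x y. if x \<in> Wr r \<and> y \<in> Wr r then
       (if x = sgen i \<circ> y then 1 else 0)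
       + (if plen r (sgen i \<circ> y) < plen r y \<and> x = y then cc else 0)
     else 0)"

section \<open>The q-permutation representation on V^{\<otimes> r}, dim V = 2m\<close>

definition tidx :: "nat \<Rightarrow> nat \<Rightarrow> nat list set" where
  "tidx m r = {xs. length xs = r \<and> set xs \<subseteq> {1..2*m}}"

(* parity of v_k *)
definition odd_v :: "nat \<Rightarrow> nat \<Rightarrow> bool" where
  "odd_v m k = (m < k)"

definition psgn :: "bool \<Rightarrow> K" where
  "psgn b = (if b then -1 else 1)"

(* matrix of T' on V \<otimes> V: coefficient of v_k' \<otimes> v_l' in T'(v_k \<otimes> v_l) *)
definition tprime :: "nat \<Rightarrow> nat \<times> nat \<Rightarrow> nat \<times> nat \<Rightarrow> K" where
  "tprime m kl' kl = (let (k, l) = kl in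
     if k = l then (if kl' = (k, l) then psgn (odd_v m k) else 0)
     else (if kl' = (l, k) then 2 * psgn (odd_v m k \<and> odd_v m l) / (qq + inverse qq) else 0)
        + (if kl' = (k, l) then (if k < l then 1 else -1) * cc / (qq + inverse qq) else 0))"

(* pi_r(T'_i), acting on tensor positions i, i+1 (1-indexed) *)
definition piTp :: "nat \<Rightarrow> nat \<Rightarrow> nat \<Rightarrow> nat list lmap" where
  "piTp m r i = (\<lambda>x y. if x \<in> tidx m r \<and> y \<in> tidx m r \<and>
        (\<forall>j<r. j \<noteq> i - 1 \<and> j \<noteq> i \<longrightarrow> x ! j = y ! j)
     then tprime m (x ! (i - 1), x ! i) (y ! (i - 1), y ! i) else 0)"

definition piT :: "nat \<Rightarrow> nat \<Rightarrow> nat \<Rightarrow> nat list lmap" where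
  "piT m r i = (\<lambda>x y. ((qq + inverse qq) * piTp m r i x y + cc * mid (tidx m r) x y) / 2)"

definition Aq :: "nat \<Rightarrow> nat \<Rightarrow> nat list lmap set" where
  "Aq m r = {nceval (tidx m r) (piT m r) p | p. ncwf r p}"

definition Cq :: "nat \<Rightarrow> nat \<Rightarrow> nat list lmap set" where
  "Cq m r = {nceval (tidx m r) (piT m r) p | p. ncwf r p \<and>
     nceval (Wr r) (regL r) (goldman p) = nceval (Wr r) (regL r) p}"

definition Bq :: "nat \<Rightarrow> nat \<Rightarrow> nat list lmap set" where
  "Bq m r = centralizer (tidx m r) (Aq m r)"

definition Dq :: "nat \<Rightarrow> nat \<Rightarrow> nat list lmap set" where
  "Dq m r = centralizer (tidx m r) (Cq m r)"

definition phiv :: "nat \<Rightarrow> nat \<Rightarrow> nat" where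
  "phiv m k = 2 * m - k + 1"

definition phiT :: "nat \<Rightarrow> nat \<Rightarrow> nat list lmap" where
  "phiT m r = (\<lambda>x y. if y \<in> tidx m r \<and> x = map (phiv m) y then
      (-1) ^ (\<Sum>i\<in>{1..<r}. \<Sum>j<i. if odd_v m (y ! j) then 1 else 0) else 0)"

definition omega :: "nat \<Rightarrow> nat \<Rightarrow> nat list lmap \<Rightarrow> nat list lmap" where
  "omega m r f = msc ((-1) ^ (r * (r - 1) div 2))
     (mmul (tidx m r) (mmul (tidx m r) (phiT m r) f) (phiT m r))"

section \<open>Crossed products A^psi_alpha[G] (elements: G -> A, sigma |-> coefficient of u_sigma)\<close>

definition cp_carrier :: "'g set \<Rightarrow> 'i lmap set \<Rightarrow> ('g \<Rightarrow> 'i lmap) set" where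
  "cp_carrier G A = {x. (\<forall>s\<in>G. x s \<in> A) \<and> (\<forall>s. s \<notin> G \<longrightarrow> x s = 0)}"

definition cp_mul :: "'g set \<Rightarrow> ('g \<Rightarrow> 'g \<Rightarrow> 'g) \<Rightarrow> 'i set \<Rightarrow> ('g \<Rightarrow> 'i lmap \<Rightarrow> 'i lmap)
    \<Rightarrow> ('g \<Rightarrow> 'g \<Rightarrow> 'i lmap) \<Rightarrow> ('g \<Rightarrow> 'i lmap) \<Rightarrow> ('g \<Rightarrow> 'i lmap) \<Rightarrow> ('g \<Rightarrow> 'i lmap)" where
  "cp_mul G gmul I psi alpha x y = (\<lambda>\<rho>.
     \<Sum>s\<in>G. \<Sum>t\<in>G. if gmul s t = \<rho>
        then mmul I (mmul I (x s) (psi s (y t))) (alpha s t) else 0)"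

definition Z2 :: "int set" where "Z2 = {1, -1}"

definition psi1 :: "nat \<Rightarrow> nat \<Rightarrow> int \<Rightarrow> nat list lmap \<Rightarrow> nat list lmap" where
  "psi1 m r s = (if s = 1 then id else omega m r)"

definition alpha1 :: "nat \<Rightarrow> nat \<Rightarrow> int \<Rightarrow> int \<Rightarrow> nat list lmap" where
  "alpha1 m r s t = (if s = -1 \<and> t = -1
      then msc ((-1) ^ (r * (r - 1) div 2)) (mid (tidx m r)) else mid (tidx m r))"

definition Phi :: "nat \<Rightarrow> nat \<Rightarrow> (int \<Rightarrow> nat list lmap) \<Rightarrow> nat list lmap" where
  "Phi m r x = x 1 + mmul (tidx m r) (x (-1)) (phiT m r)"

end

theory Submission
  imports Defs
begin

lemma qq_nz: "qq \<noteq> 0"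
  unfolding qq_def by (simp add: Zero_fract_def eq_fract)

lemma qq_sq1: "qq * qq + 1 \<noteq> 0"
proof -
  have "qq * qq + 1 = Fract ([:0,1:] * [:0,1:] + 1) 1"
    unfolding qq_def by (simp add: One_fract_def)
  moreover have "[:0,1:] * [:0,1:] + 1 \<noteq> (0::rat poly)"
  proof
    assume "[:0,1:] * [:0,1:] + 1 = (0::rat poly)"
    then have "coeff ([:0,1:] * [:0,1:] + 1) 2 = (0::rat)" by simp
    then show False by (simp add: numeral_2_eq_2)
  qed
  ultimately show ?thesis by (simp only:) (simp add: Zero_fract_def eq_fract)
qed

lemma ss_nz: "qq + inverse qq \<noteq> 0"
proof
  assume "qq + inverse qq = 0"
  then have "qq * (qq + inverse qq) = 0" by simp
  then have "qq * qq + 1 = 0" using qq_nz by (simp add: distrib_left)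
  then show False using qq_sq1 by simp
qed

lemma lin_iff: "f \<in> lin I \<longleftrightarrow> (\<forall>x y. x \<notin> I \<or> y \<notin> I \<longrightarrow> f x y = 0)"
  by (simp add: lin_def)

lemma linD1: "f \<in> lin I \<Longrightarrow> x \<notin> I \<Longrightarrow> f x y = 0"
  by (simp add: lin_def)
lemma linD2: "f \<in> lin I \<Longrightarrow> y \<notin> I \<Longrightarrow> f x y = 0"
  by (simp add: lin_def)

lemma lin_zero[simp]: "0 \<in> lin I" by (simp add: lin_def)
lemma lin_add[simp]: "f \<in> lin I \<Longrightarrow> g \<in> lin I \<Longrightarrow> f + g \<in> lin I"
  by (simp add: lin_def)
lemma lin_diff[simp]: "f \<in> lin I \<Longrightarrow> g \<in> lin I \<Longrightarrow> f - g \<in> lin I"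
  by (simp add: lin_def)
lemma lin_uminus[simp]: "f \<in> lin I \<Longrightarrow> - f \<in> lin I"
  by (simp add: lin_def)
lemma lin_msc[simp]: "f \<in> lin I \<Longrightarrow> msc c f \<in> lin I"
  by (simp add: lin_def msc_def)
lemma lin_mid[simp]: "mid I \<in> lin I"
  by (simp add: lin_def mid_def)
lemma lin_mmul[simp]: "f \<in> lin I \<Longrightarrow> g \<in> lin I \<Longrightarrow> mmul I f g \<in> lin I"
  unfolding lin_def mmul_def by auto

lemma mmul_assoc: "finite I \<Longrightarrow> mmul I (mmul I f g) h = mmul I f (mmul I g h)"
  unfolding mmul_def
  by (auto simp: sum_distrib_left sum_distrib_right mult.assoc intro!: ext sum.swap)

lemma if10_mult: "(if P then 1 else 0) * a = (if P then a else (0::'a::semiring_1))"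
  "a * (if P then 1 else 0) = (if P then a else (0::'a::semiring_1))" by simp_all

lemma mmul_mid_left[simp]: "finite I \<Longrightarrow> g \<in> lin I \<Longrightarrow> mmul I (mid I) g = g"
proof (intro ext)
  fix x y assume "finite I" "g \<in> lin I"
  then show "mmul I (mid I) g x y = g x y"
    unfolding mmul_def mid_def by (cases "x \<in> I") (auto simp: linD1 if10_mult sum.delta)
qed

lemma mmul_mid_right[simp]: "finite I \<Longrightarrow> g \<in> lin I \<Longrightarrow> mmul I g (mid I) = g"
proof (intro ext)
  fix x y assume "finite I" "g \<in> lin I"
  then show "mmul I g (mid I) x y = g x y"
    unfolding mmul_def mid_def by (cases "y \<in> I") (auto simp: linD2 if10_mult sum.delta')
qed

lemma mmul_add_left: "mmul I (f + g) h = mmul I f h + mmul I g h"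
  unfolding mmul_def by (auto intro!: ext simp: distrib_right sum.distrib)
lemma mmul_add_right: "mmul I h (f + g) = mmul I h f + mmul I h g"
  unfolding mmul_def by (auto intro!: ext simp: distrib_left sum.distrib)
lemma mmul_diff_left: "mmul I (f - g) h = mmul I f h - mmul I g h"
  unfolding mmul_def by (auto intro!: ext simp: left_diff_distrib sum_subtractf)
lemma mmul_diff_right: "mmul I h (f - g) = mmul I h f - mmul I h g"
  unfolding mmul_def by (auto intro!: ext simp: right_diff_distrib sum_subtractf)
lemma mmul_msc_left: "mmul I (msc c f) h = msc c (mmul I f h)"
  unfolding mmul_def msc_def by (auto intro!: ext simp: sum_distrib_left mult.assoc)
lemma mmul_msc_right: "mmul I h (msc c f) = msc c (mmul I h f)"
  unfolding mmul_def msc_def by (auto intro!: ext simp: sum_distrib_left mult.left_commute)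
lemma mmul_uminus_left: "mmul I (- f) h = - mmul I f h"
  unfolding mmul_def by (auto intro!: ext simp: sum_negf)
lemma mmul_uminus_right: "mmul I h (- f) = - mmul I h f"
  unfolding mmul_def by (auto intro!: ext simp: sum_negf)
lemma mmul_zero_left[simp]: "mmul I 0 h = 0"
  unfolding mmul_def by (auto intro!: ext)
lemma mmul_zero_right[simp]: "mmul I h 0 = 0"
  unfolding mmul_def by (auto intro!: ext)

lemma msc_add: "msc c (f + g) = msc c f + msc c g"
  by (auto simp: msc_def distrib_left fun_eq_iff)
lemma msc_add2: "msc (a + b) f = msc a f + msc b f"
  by (auto simp: msc_def distrib_right fun_eq_iff)
lemma msc_msc[simp]: "msc a (msc b f) = msc (a * b) f"
  by (auto simp: msc_def fun_eq_iff)
lemma msc_one[simp]: "msc 1 f = f"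
  by (auto simp: msc_def)
lemma msc_zero[simp]: "msc 0 f = 0"
  by (auto simp: msc_def fun_eq_iff)
lemma msc_zero2[simp]: "msc c 0 = 0"
  by (auto simp: msc_def fun_eq_iff)
lemma msc_uminus: "msc (-1) f = - f"
  by (auto simp: msc_def fun_eq_iff)

lemmas mmul_lin_simps = mmul_add_left mmul_add_right mmul_diff_left mmul_diff_right
  mmul_msc_left mmul_msc_right mmul_uminus_left mmul_uminus_right

section \<open>Combinatorics of the symmetric group\<close>

definition desc :: "(nat \<Rightarrow> nat) \<Rightarrow> nat \<Rightarrow> bool" where
  "desc w i = (inv w i < inv w (i - 1))"

definition invs :: "nat \<Rightarrow> (nat \<Rightarrow> nat) \<Rightarrow> (nat \<times> nat) set" where
  "invs r w = {(i, j). i < j \<and> j < r \<and> w j < w i}"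

lemma plen_invs: "plen r w = card (invs r w)"
  by (simp add: plen_def invs_def)

lemma finite_invs: "finite (invs r w)"
  by (rule finite_subset[of _ "{0..<r} \<times> {0..<r}"]) (auto simp: invs_def)

lemma Wr_perm: "w \<in> Wr r \<Longrightarrow> w permutes {0..<r}"
  by (simp add: Wr_def)

lemma Wr_inv_app[simp]: "w \<in> Wr r \<Longrightarrow> w (inv w x) = x" "w \<in> Wr r \<Longrightarrow> inv w (w x) = x"
  using permutes_inverses[OF Wr_perm] by auto

lemma Wr_lt: "w \<in> Wr r \<Longrightarrow> x < r \<Longrightarrow> w x < r"
  using permutes_in_image[OF Wr_perm, of w r x] by auto

lemma Wr_inv_lt: "w \<in> Wr r \<Longrightarrow> x < r \<Longrightarrow> inv w x < r"
  using permutes_in_image[OF permutes_inv[OF Wr_perm], of w r x] by auto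

lemma Wr_inj_eq[simp]: "w \<in> Wr r \<Longrightarrow> (w x = w y) = (x = y)"
  using permutes_inj[OF Wr_perm] by (auto dest: injD)

lemma Wr_bij: "w \<in> Wr r \<Longrightarrow> bij w"
  using permutes_bij[OF Wr_perm] by auto

lemma sgen_Wr: "1 \<le> i \<Longrightarrow> i < r \<Longrightarrow> sgen i \<in> Wr r"
  unfolding Wr_def sgen_def by (auto intro!: permutes_swap_id)

lemma Wr_comp: "v \<in> Wr r \<Longrightarrow> w \<in> Wr r \<Longrightarrow> v \<circ> w \<in> Wr r"
  unfolding Wr_def by (auto intro: permutes_compose)

lemma sgen_comp_Wr: "1 \<le> i \<Longrightarrow> i < r \<Longrightarrow> w \<in> Wr r \<Longrightarrow> sgen i \<circ> w \<in> Wr r"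
  by (rule Wr_comp[OF sgen_Wr])

lemma id_Wr[simp]: "id \<in> Wr r"
  unfolding Wr_def by (simp add: permutes_id)

lemma finite_Wr: "finite (Wr r)"
  unfolding Wr_def using finite_permutations[of "{0..<r}"] by simp

lemma sgen_sgen[simp]: "sgen i \<circ> (sgen i \<circ> w) = w"
  by (auto simp: sgen_def fun_eq_iff)

lemma sgen_app_sgen[simp]: "sgen i (sgen i x) = x"
  by (auto simp: sgen_def)

lemma inv_sgen_comp: "w \<in> Wr r \<Longrightarrow> inv (sgen i \<circ> w) = inv w \<circ> sgen i"
  unfolding sgen_def
  by (simp add: o_inv_distrib Wr_bij bij_transpose)

lemma transpose_order:
  assumes "u \<noteq> v" "\<not> (u \<in> {i - 1, i} \<and> v \<in> {i - 1, i})" "1 \<le> (i::nat)"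
  shows "(transpose (i - 1) i v < transpose (i - 1) i u) = (v < u)"
  using assms by (auto simp: transpose_def)

lemma plen_desc:
  assumes w: "w \<in> Wr r" and i: "1 \<le> i" "i < r" and d: "desc w i"
  shows "plen r w = Suc (plen r (sgen i \<circ> w))"
proof -
  define a where "a = inv w (i - 1)"
  define b where "b = inv w i"
  have wa: "w a = i - 1" and wb: "w b = i" using w by (simp_all add: a_def b_def)
  have ar: "a < r" "b < r" using w i by (simp_all add: a_def b_def Wr_inv_lt)
  have ba: "b < a" using d by (simp add: desc_def a_def b_def)
  have nin: "(b, a) \<notin> invs r (sgen i \<circ> w)"
    using wa wb i by (auto simp: invs_def sgen_def transpose_def)
  have eq: "invs r w = insert (b, a) (invs r (sgen i \<circ> w))"
  proof (intro set_eqI)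
    fix p :: "nat \<times> nat"
    obtain x y where p: "p = (x, y)" by (cases p)
    show "p \<in> invs r w \<longleftrightarrow> p \<in> insert (b, a) (invs r (sgen i \<circ> w))"
    proof (cases "p = (b, a)")
      case True
      then show ?thesis using wa wb ba ar i by (auto simp: invs_def)
    next
      case False
      show ?thesis
      proof (cases "x < y \<and> y < r")
        case True
        have ne: "w x \<noteq> w y" using True w by simp
        have nab: "\<not> (w x \<in> {i - 1, i} \<and> w y \<in> {i - 1, i})"
        proof
          assume h: "w x \<in> {i - 1, i} \<and> w y \<in> {i - 1, i}"
          then have "x \<in> {a, b} \<and> y \<in> {a, b}" using wa wb w
            by (metis Wr_inj_eq insert_iff singletonD)
          then show False using True False p ba by auto
        qed
        have "(sgen i (w y) < sgen i (w x)) = (w y < w x)"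
          unfolding sgen_def by (rule transpose_order[OF ne nab i(1)])
        then show ?thesis using True False p by (auto simp: invs_def)
      next
        case False
        then show ?thesis using p ba ar by (auto simp: invs_def)
      qed
    qed
  qed
  show ?thesis unfolding plen_invs eq using nin finite_invs by simp
qed

lemma desc_sgen_iff:
  assumes w: "w \<in> Wr r" and i: "1 \<le> i" "i < r"
  shows "desc (sgen i \<circ> w) i \<longleftrightarrow> \<not> desc w i"
proof -
  have "inv w i \<noteq> inv w (i - 1)"
    using w i by (metis Wr_inv_app(1) diff_less less_numeral_extra(1) nat_neq_iff order_less_le_trans)
  then show ?thesis
    using i unfolding desc_def inv_sgen_comp[OF w] by (auto simp: sgen_def)
qed

lemma plen_asc:
  assumes w: "w \<in> Wr r" and i: "1 \<le> i" "i < r" and d: "\<not> desc w i"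
  shows "plen r (sgen i \<circ> w) = Suc (plen r w)"
  using plen_desc[of "sgen i \<circ> w" r i] desc_sgen_iff[OF w i] d w i sgen_Wr Wr_comp by auto

definition wP :: "nat list \<Rightarrow> nat \<Rightarrow> nat" where
  "wP ws = foldr (\<lambda>i w. sgen i \<circ> w) ws id"

definition validw :: "nat \<Rightarrow> nat list \<Rightarrow> bool" where
  "validw r ws = (\<forall>i\<in>set ws. 1 \<le> i \<and> i < r)"

lemma wP_Nil[simp]: "wP [] = id" by (simp add: wP_def)
lemma wP_Cons[simp]: "wP (i # ws) = sgen i \<circ> wP ws" by (simp add: wP_def)
lemma validw_Nil[simp]: "validw r []" by (simp add: validw_def)
lemma validw_Cons[simp]: "validw r (i # ws) = (1 \<le> i \<and> i < r \<and> validw r ws)"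
  by (auto simp: validw_def)

lemma wP_Wr: "validw r ws \<Longrightarrow> wP ws \<in> Wr r"
  by (induction ws) (auto simp: sgen_comp_Wr)

lemma plen_id[simp]: "plen r id = 0"
proof -
  have e: "{(i, j). i < j \<and> j < r \<and> (j::nat) < i} = {}" by auto
  show ?thesis unfolding plen_def id_def e by simp
qed

lemma plen_id'[simp]: "plen r (\<lambda>a. a) = 0"
  using plen_id[of r] by (simp add: id_def)

lemma plen_step_le:
  assumes "w \<in> Wr r" "1 \<le> i" "i < r"
  shows "plen r (sgen i \<circ> w) \<le> Suc (plen r w)"
  using plen_desc[OF assms] plen_asc[OF assms] by (cases "desc w i") auto

lemma plen_wP_le: "validw r ws \<Longrightarrow> plen r (wP ws) \<le> length ws"
proof (induction ws)
  case Nil then show ?case by simp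
next
  case (Cons i ws)
  from Cons.prems have h: "1 \<le> i" "i < r" "validw r ws" by auto
  then have "plen r (sgen i \<circ> wP ws) \<le> Suc (plen r (wP ws))" by (intro plen_step_le wP_Wr)
  moreover have "plen r (wP ws) \<le> length ws" using Cons.IH h by simp
  ultimately show ?case by (simp only: wP_Cons length_Cons)
qed

lemma plen0_id:
  assumes w: "w \<in> Wr r" and p: "plen r w = 0"
  shows "w = id"
proof -
  have e: "invs r w = {}" using p finite_invs by (simp add: plen_invs)
  have mono: "w x < w y" if "x < y" "y < r" for x y
  proof -
    have "w x \<noteq> w y" using that w by simp
    moreover have "\<not> w y < w x" using e that by (auto simp: invs_def)
    ultimately show ?thesis by simp
  qed
  have ge: "i < r \<longrightarrow> i \<le> w i" for i
  proof (induction i)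
    case 0 then show ?case by simp
  next
    case (Suc i)
    then show ?case using mono[of i "Suc i"] by auto
  qed
  show ?thesis
    by (rule permutes_natset_ge[OF Wr_perm[OF w]]) (use ge in auto)
qed

lemma exists_desc:
  assumes w: "w \<in> Wr r" and p: "plen r w \<noteq> 0"
  shows "\<exists>i. 1 \<le> i \<and> i < r \<and> desc w i"
proof (rule ccontr)
  assume "\<not> ?thesis"
  then have nd: "1 \<le> i \<Longrightarrow> i < r \<Longrightarrow> inv w (i - 1) < inv w i" for i
    using w by (auto simp: desc_def)
      (metis One_nat_def Wr_inv_app(1) diff_less less_numeral_extra(1) nat_neq_iff
        order_less_le_trans)
  have mono: "x < y \<longrightarrow> y < r \<longrightarrow> inv w x < inv w y" for x y
  proof (induction y)
    case 0 then show ?case by simp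
  next
    case (Suc y)
    then show ?case using nd[of "Suc y"] by (auto simp: less_Suc_eq)
  qed
  have "invs r w \<noteq> {}" using p by (auto simp: plen_invs)
  then obtain x y where xy: "x < y" "y < r" "w y < w x" by (auto simp: invs_def)
  have "w x < r" using xy w by (simp add: Wr_lt)
  then have "inv w (w y) < inv w (w x)" using mono[of "w y" "w x"] xy by simp
  then show False using xy w by simp
qed

lemma exists_red:
  "w \<in> Wr r \<Longrightarrow> \<exists>ws. validw r ws \<and> wP ws = w \<and> length ws = plen r w"
proof (induction "plen r w" arbitrary: w)
  case 0
  then show ?case using plen0_id[of w r] by (intro exI[of _ "[]"]) auto
next
  case (Suc n)
  obtain i where i: "1 \<le> i" "i < r" "desc w i" using exists_desc[OF Suc(3)] Suc(2) by auto
  have pl: "plen r (sgen i \<circ> w) = n" using plen_desc[OF Suc(3) i] Suc(2) by simp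
  obtain ws where ws: "validw r ws" "wP ws = sgen i \<circ> w" "length ws = n"
    using Suc(1)[OF pl[symmetric] sgen_comp_Wr[OF i(1,2) Suc(3)]] pl by auto
  show ?case using ws i Suc(2) by (intro exI[of _ "i # ws"]) auto
qed

lemma sgen_app: "sgen i x = (if x = i - 1 then i else if x = i then i - 1 else x)"
  by (simp add: sgen_def transpose_def)

lemma sgenS: "sgen (Suc k) k = Suc k" "sgen (Suc k) (Suc k) = k"
  "x \<noteq> k \<Longrightarrow> x \<noteq> Suc k \<Longrightarrow> sgen (Suc k) x = x"
  by (simp_all add: sgen_app)

lemma desc_comp_iff: "w \<in> Wr r \<Longrightarrow> desc (sgen i \<circ> w) j = (inv w (sgen i j) < inv w (sgen i (j - 1)))"
  unfolding desc_def inv_sgen_comp by simp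

lemma desc_far:
  assumes w: "w \<in> Wr r" and "1 \<le> i" "1 \<le> j" and far: "i + 1 < j \<or> j + 1 < i"
    and d: "desc w j"
  shows "desc (sgen i \<circ> w) j"
proof -
  obtain k l where kl: "i = Suc k" "j = Suc l" using assms by (metis Suc_le_D One_nat_def)
  have "sgen i j = j" "sgen i (j - 1) = j - 1" using far unfolding kl by (auto simp: sgenS)
  then show ?thesis using d unfolding desc_comp_iff[OF w] by (simp add: desc_def)
qed

lemma desc_adj:
  assumes w: "w \<in> Wr r" and ij: "1 \<le> i" "1 \<le> j" "i < r" "j < r" and adj: "j = i + 1 \<or> i = j + 1"
    and di: "desc w i" and dj: "desc w j"
  shows "desc (sgen i \<circ> w) j" "desc (sgen j \<circ> (sgen i \<circ> w)) i"
proof -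
  have w1: "sgen i \<circ> w \<in> Wr r" using w ij by (simp add: sgen_comp_Wr)
  have e: "desc (sgen j \<circ> (sgen i \<circ> w)) i =
      (inv w (sgen i (sgen j i)) < inv w (sgen i (sgen j (i - 1))))"
    unfolding desc_def inv_sgen_comp[OF w1] inv_sgen_comp[OF w] by simp
  obtain k where k: "i = Suc k" using ij by (metis Suc_le_D One_nat_def)
  have "desc (sgen i \<circ> w) j \<and> desc (sgen j \<circ> (sgen i \<circ> w)) i"
    using adj
  proof (elim disjE)
    assume a: "j = i + 1"
    have "sgen i j = j" "sgen i (j - 1) = i - 1" "sgen j i = i + 1" "sgen i (i + 1) = i + 1"
      "sgen j (i - 1) = i - 1" "sgen i (i - 1) = i"
      unfolding a k by (auto simp: sgenS)
    then show ?thesis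
      using di dj a unfolding e desc_comp_iff[OF w] by (simp add: desc_def)
  next
    assume a: "i = j + 1"
    obtain l where l: "j = Suc l" using ij by (metis Suc_le_D One_nat_def)
    have "sgen i j = i" "sgen i (j - 1) = j - 1" "sgen j i = i" "sgen i i = j"
      "sgen j (i - 1) = j - 1"
      using a unfolding l by (auto simp: sgenS)
    then show ?thesis
      using di dj a unfolding e desc_comp_iff[OF w] by (simp add: desc_def)
  qed
  then show "desc (sgen i \<circ> w) j" "desc (sgen j \<circ> (sgen i \<circ> w)) i" by auto
qed

lemma sgen_comm_pt: "1 \<le> i \<Longrightarrow> 1 \<le> j \<Longrightarrow> i + 1 < j \<or> j + 1 < i \<Longrightarrow> sgen i (sgen j y) = sgen j (sgen i y)"
proof -
  assume a: "1 \<le> i" "1 \<le> j" "i + 1 < j \<or> j + 1 < i"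
  obtain k l where kl: "i = Suc k" "j = Suc l" using a by (metis Suc_le_D One_nat_def)
  consider "y = k" | "y = Suc k" | "y = l" | "y = Suc l" | "y \<noteq> k \<and> y \<noteq> Suc k \<and> y \<noteq> l \<and> y \<noteq> Suc l" by blast
  then show ?thesis using a unfolding kl by cases (auto simp add: sgenS)
qed

lemma sgen_braid_pt: "1 \<le> i \<Longrightarrow> 1 \<le> j \<Longrightarrow> j = i + 1 \<or> i = j + 1 \<Longrightarrow> sgen i (sgen j (sgen i y)) = sgen j (sgen i (sgen j y))"
proof -
  assume a: "1 \<le> i" "1 \<le> j" "j = i + 1 \<or> i = j + 1"
  obtain k l where kl: "i = Suc k" "j = Suc l" using a by (metis Suc_le_D One_nat_def)
  consider "y = k" | "y = Suc k" | "y = l" | "y = Suc l" | "y \<noteq> k \<and> y \<noteq> Suc k \<and> y \<noteq> l \<and> y \<noteq> Suc l" by blast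
  then show ?thesis using a unfolding kl by cases (auto simp add: sgenS)
qed

lemma sgen_comm:
  assumes "1 \<le> i" "1 \<le> j" "i + 1 < j \<or> j + 1 < i"
  shows "sgen i \<circ> (sgen j \<circ> w) = sgen j \<circ> (sgen i \<circ> w)"
  using sgen_comm_pt[OF assms] by (simp add: fun_eq_iff)

lemma sgen_braid:
  assumes "1 \<le> i" "1 \<le> j" "j = i + 1 \<or> i = j + 1"
  shows "sgen i \<circ> (sgen j \<circ> (sgen i \<circ> w)) = sgen j \<circ> (sgen i \<circ> (sgen j \<circ> w))"
  using sgen_braid_pt[OF assms] by (simp add: fun_eq_iff)

section \<open>Representations of the Hecke algebra factor through the regular representation\<close>

lemma sum_app: "(\<Sum>y\<in>S. X y) a b = (\<Sum>y\<in>S. (X y a b :: K))"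
  by (induction S rule: infinite_finite_induct) auto

lemma msc_sum_left: "msc (\<Sum>y\<in>S. a y) X = (\<Sum>y\<in>S. msc (a y) X)"
  by (simp add: fun_eq_iff msc_def sum_app sum_distrib_right)

lemma msc_sum_right: "msc c (\<Sum>y\<in>S. X y) = (\<Sum>y\<in>S. msc c (X y))"
  by (simp add: fun_eq_iff msc_def sum_app sum_distrib_left)

lemma mmul_sum_right: "mmul J A (\<Sum>y\<in>S. X y) = (\<Sum>y\<in>S. mmul J A (X y))"
  unfolding mmul_def by (simp add: fun_eq_iff sum_app sum_distrib_left sum.swap[where A=J])

lemma mmul_sum_left: "mmul J (\<Sum>y\<in>S. X y) A = (\<Sum>y\<in>S. mmul J (X y) A)"
  unfolding mmul_def by (simp add: fun_eq_iff sum_app sum_distrib_right sum.swap[where A=J])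

lemma lin_sum: "(\<And>y. y \<in> S \<Longrightarrow> X y \<in> lin J) \<Longrightarrow> (\<Sum>y\<in>S. X y) \<in> lin J"
  by (auto simp: lin_def sum_app intro!: sum.neutral)


locale hrep =
  fixes I :: "'i set" and r :: nat and rho :: "nat \<Rightarrow> 'i lmap"
  assumes finI: "finite I"
    and rho_lin: "\<And>i. 1 \<le> i \<Longrightarrow> i < r \<Longrightarrow> rho i \<in> lin I"
    and quad: "\<And>i. 1 \<le> i \<Longrightarrow> i < r \<Longrightarrow> mmul I (rho i) (rho i) = msc cc (rho i) + mid I"
    and braid: "\<And>i. 1 \<le> i \<Longrightarrow> i + 1 < r \<Longrightarrow>
      mmul I (rho i) (mmul I (rho (i + 1)) (rho i)) = mmul I (rho (i + 1)) (mmul I (rho i) (rho (i + 1)))"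
    and comm: "\<And>i j. 1 \<le> i \<Longrightarrow> i + 1 < j \<Longrightarrow> j < r \<Longrightarrow>
      mmul I (rho i) (rho j) = mmul I (rho j) (rho i)"
begin

definition wT :: "nat list \<Rightarrow> 'i lmap" where
  "wT ws = foldr (\<lambda>i M. mmul I (rho i) M) ws (mid I)"

lemma wT_Nil[simp]: "wT [] = mid I" by (simp add: wT_def)
lemma wT_Cons[simp]: "wT (i # ws) = mmul I (rho i) (wT ws)" by (simp add: wT_def)

lemma wT_lin: "validw r ws \<Longrightarrow> wT ws \<in> lin I"
  by (induction ws) (auto simp: rho_lin)

lemma assoc3: "mmul I a (mmul I b c) = mmul I (mmul I a b) c"
  by (simp add: mmul_assoc[OF finI])

lemma matsumoto:
  "validw r ws1 \<Longrightarrow> validw r ws2 \<Longrightarrow> length ws1 = n \<Longrightarrow> length ws2 = n \<Longrightarrow>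
   wP ws1 = wP ws2 \<Longrightarrow> plen r (wP ws1) = n \<Longrightarrow> wT ws1 = wT ws2"
proof (induction n arbitrary: ws1 ws2 rule: less_induct)
  case (less n)
  show ?case
  proof (cases ws1)
    case Nil
    then show ?thesis using less.prems by simp
  next
    case (Cons i a)
    obtain j b where ws2: "ws2 = j # b" using less.prems Cons by (cases ws2) auto
    define w where "w = wP ws1"
    have wW: "w \<in> Wr r" using less.prems by (simp add: w_def wP_Wr)
    have i: "1 \<le> i" "i < r" and va: "validw r a" using less.prems Cons by auto
    have j: "1 \<le> j" "j < r" and vb: "validw r b" using less.prems ws2 by auto
    have la: "length a + 1 = n" and lb: "length b + 1 = n" using less.prems Cons ws2 by auto
    have wa: "wP a = sgen i \<circ> w" using Cons by (simp add: w_def)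
    have "w = sgen j \<circ> wP b" using ws2 less.prems(5) by (simp only: w_def wP_Cons)
    then have wb: "wP b = sgen j \<circ> w" by (simp only: sgen_sgen)
    have pw: "plen r w = n" using less.prems by (simp add: w_def)
    have di: "desc w i"
    proof (rule ccontr)
      assume "\<not> desc w i"
      then have "plen r (sgen i \<circ> w) = Suc n" using plen_asc[OF wW i] pw by simp
      moreover have "plen r (wP a) \<le> length a" using va by (rule plen_wP_le)
      ultimately show False using wa la by simp
    qed
    have dj: "desc w j"
    proof (rule ccontr)
      assume "\<not> desc w j"
      then have "plen r (sgen j \<circ> w) = Suc n" using plen_asc[OF wW j] pw by simp
      moreover have "plen r (wP b) \<le> length b" using vb by (rule plen_wP_le)
      ultimately show False using wb lb by simp
    qed
    have pa: "plen r (sgen i \<circ> w) + 1 = n" using plen_desc[OF wW i di] pw by simp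
    have pb: "plen r (sgen j \<circ> w) + 1 = n" using plen_desc[OF wW j dj] pw by simp
    have wiW: "sgen i \<circ> w \<in> Wr r" using wW i by (simp add: sgen_comp_Wr)
    have wjW: "sgen j \<circ> w \<in> Wr r" using wW j by (simp add: sgen_comp_Wr)
    have IH: "wT x = wT y" if "validw r x" "validw r y" "length x + 1 = n" "length y + 1 = n"
      "wP x = wP y" "plen r (wP x) + 1 = n" for x y
      using less.IH[of "n - 1" x y] that by auto
    consider "i = j" | "i + 1 < j \<or> j + 1 < i" | "j = i + 1 \<or> i = j + 1" by linarith
    then show ?thesis
    proof cases
      case 1
      have "wT a = wT b" using IH[OF va vb la lb] wa wb pa 1 by simp
      then show ?thesis using Cons ws2 1 by simp
    next
      case 2
      have d1: "desc (sgen i \<circ> w) j" using desc_far[OF wW i(1) j(1) 2 dj] .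
      define u where "u = sgen j \<circ> (sgen i \<circ> w)"
      have uW: "u \<in> Wr r" using wiW j by (simp add: u_def sgen_comp_Wr)
      have pu: "plen r u + 2 = n" using plen_desc[OF wiW j d1] pa by (simp add: u_def)
      obtain c where c: "validw r c" "wP c = u" "length c = plen r u" using exists_red[OF uW] by blast
      have "wT a = wT (j # c)"
        using IH[of a "j # c"] va c j la pu wa pa by (simp add: u_def)
      moreover have "wT b = wT (i # c)"
      proof -
        have "wP (i # c) = sgen j \<circ> w"
          using c sgen_comm[OF i(1) j(1) 2, of "sgen i \<circ> w"] by (simp add: u_def)
        then show ?thesis using IH[of b "i # c"] vb c i lb pu wb pb by simp
      qed
      moreover have "mmul I (rho i) (rho j) = mmul I (rho j) (rho i)"
        using 2 comm i j by (metis Suc_eq_plus1 Suc_lessD less_trans_Suc)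
      ultimately show ?thesis using Cons ws2 by (simp add: assoc3)
    next
      case 3
      have d1: "desc (sgen i \<circ> w) j" and d2: "desc (sgen j \<circ> (sgen i \<circ> w)) i"
        using desc_adj[OF wW i(1) j(1) i(2) j(2) 3 di dj] by auto
      define u1 where "u1 = sgen j \<circ> (sgen i \<circ> w)"
      have u1W: "u1 \<in> Wr r" using wiW j by (simp add: u1_def sgen_comp_Wr)
      have pu1: "plen r u1 + 2 = n" using plen_desc[OF wiW j d1] pa by (simp add: u1_def)
      define u where "u = sgen i \<circ> u1"
      have uW: "u \<in> Wr r" using u1W i by (simp add: u_def sgen_comp_Wr)
      have pu: "plen r u + 3 = n" using plen_desc[OF u1W i] d2 pu1 by (simp add: u_def u1_def)
      obtain c where c: "validw r c" "wP c = u" "length c = plen r u" using exists_red[OF uW] by blast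
      have "wT a = wT (j # i # c)"
        using IH[of a "j # i # c"] va c j i la pu wa pa by (simp add: u_def u1_def)
      moreover have "wT b = wT (i # j # c)"
      proof -
        have "sgen i \<circ> (sgen j \<circ> (sgen i \<circ> (sgen j \<circ> (sgen i \<circ> w)))) = sgen j \<circ> w"
          using sgen_braid[OF i(1) j(1) 3, of "sgen j \<circ> (sgen i \<circ> w)"] by simp
        then have "wP (i # j # c) = sgen j \<circ> w"
          using c by (simp add: u_def u1_def)
        then show ?thesis using IH[of b "i # j # c"] vb c i j lb pu wb pb by simp
      qed
      moreover have "mmul I (rho i) (mmul I (rho j) (rho i)) = mmul I (rho j) (mmul I (rho i) (rho j))"
        using 3 braid i j by (metis Suc_eq_plus1)
      ultimately show ?thesis using Cons ws2 by (simp add: assoc3)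
    qed
  qed
qed

definition Pi :: "(nat \<Rightarrow> nat) \<Rightarrow> 'i lmap" where
  "Pi w = wT (SOME ws. validw r ws \<and> wP ws = w \<and> length ws = plen r w)"

lemma Pi_red: assumes "validw r ws" "length ws = plen r (wP ws)" shows "Pi (wP ws) = wT ws"
proof -
  define ws' where "ws' = (SOME ws'. validw r ws' \<and> wP ws' = wP ws \<and> length ws' = plen r (wP ws))"
  have "validw r ws' \<and> wP ws' = wP ws \<and> length ws' = plen r (wP ws)"
    unfolding ws'_def by (rule someI_ex) (use assms in blast)
  then have "wT ws' = wT ws" using matsumoto[of ws' ws "plen r (wP ws)"] assms by auto
  then show ?thesis by (simp add: Pi_def ws'_def)
qed

lemma Pi_lin: "w \<in> Wr r \<Longrightarrow> Pi w \<in> lin I"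
proof -
  assume "w \<in> Wr r"
  then obtain ws where ws: "validw r ws" "wP ws = w" "length ws = plen r w" using exists_red by blast
  then show ?thesis using Pi_red[of ws] wT_lin by auto
qed

lemma Pi_id: "Pi id = mid I"
  using Pi_red[of "[]"] by simp

lemma Pi_asc:
  assumes w: "w \<in> Wr r" and i: "1 \<le> i" "i < r" and d: "\<not> desc w i"
  shows "mmul I (rho i) (Pi w) = Pi (sgen i \<circ> w)"
proof -
  obtain ws where ws: "validw r ws" "wP ws = w" "length ws = plen r w" using exists_red[OF w] by blast
  have "Pi (wP (i # ws)) = wT (i # ws)"
    using ws i plen_asc[OF w i d] by (intro Pi_red) auto
  then show ?thesis using Pi_red[of ws] ws by simp
qed

lemma Pi_desc:
  assumes w: "w \<in> Wr r" and i: "1 \<le> i" "i < r" and d: "desc w i"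
  shows "mmul I (rho i) (Pi w) = msc cc (Pi w) + Pi (sgen i \<circ> w)"
proof -
  define w' where "w' = sgen i \<circ> w"
  have w'W: "w' \<in> Wr r" using w i by (simp add: w'_def sgen_comp_Wr)
  have d': "\<not> desc w' i" using desc_sgen_iff[OF w i] d by (simp add: w'_def)
  have e: "Pi w = mmul I (rho i) (Pi w')"
    using Pi_asc[OF w'W i d'] by (simp add: w'_def)
  have "mmul I (rho i) (Pi w) = mmul I (mmul I (rho i) (rho i)) (Pi w')"
    by (simp add: e assoc3)
  also have "\<dots> = msc cc (Pi w) + Pi w'"
    using quad[OF i] Pi_lin[OF w'W] finI by (simp add: mmul_add_left mmul_msc_left e)
  finally show ?thesis by (simp add: w'_def)
qed

definition Lm :: "((nat \<Rightarrow> nat) \<Rightarrow> K) \<Rightarrow> 'i lmap" where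
  "Lm g = (\<Sum>w\<in>Wr r. msc (g w) (Pi w))"

definition mapply :: "(nat \<Rightarrow> nat) lmap \<Rightarrow> ((nat \<Rightarrow> nat) \<Rightarrow> K) \<Rightarrow> ((nat \<Rightarrow> nat) \<Rightarrow> K)" where
  "mapply A g = (\<lambda>x. \<Sum>y\<in>Wr r. A x y * g y)"

lemma Lm_lin: "Lm g \<in> lin I"
  unfolding Lm_def by (intro lin_sum lin_msc Pi_lin)

lemma regL_col:
  assumes y: "y \<in> Wr r" and i: "1 \<le> i" "i < r"
  shows "(\<Sum>x\<in>Wr r. msc (regL r i x y) (Pi x)) = mmul I (rho i) (Pi y)"
proof -
  have syW: "sgen i \<circ> y \<in> Wr r" using y i by (simp add: sgen_comp_Wr)
  have pl: "(plen r (sgen i \<circ> y) < plen r y) = desc y i"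
    using plen_desc[OF y i] plen_asc[OF y i] by (cases "desc y i") auto
  have "(\<Sum>x\<in>Wr r. msc (regL r i x y) (Pi x)) =
     (\<Sum>x\<in>Wr r. (if x = sgen i \<circ> y then Pi x else 0) + (if x = y then (if desc y i then msc cc (Pi x) else 0) else 0))"
  proof (intro sum.cong refl)
    fix x assume x: "x \<in> Wr r"
    show "msc (regL r i x y) (Pi x) = (if x = sgen i \<circ> y then Pi x else 0) + (if x = y then (if desc y i then msc cc (Pi x) else 0) else 0)"
      unfolding regL_def using x y pl by (simp add: msc_add2)
  qed
  also have "\<dots> = (\<Sum>x\<in>Wr r. (if x = sgen i \<circ> y then Pi x else 0)) +
      (\<Sum>x\<in>Wr r. (if x = y then (if desc y i then msc cc (Pi x) else 0) else 0))"
    by (rule sum.distrib)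
  also have "\<dots> = Pi (sgen i \<circ> y) + (if desc y i then msc cc (Pi y) else 0)"
    using syW y by (simp only: sum.delta finite_Wr if_True)
  also have "\<dots> = mmul I (rho i) (Pi y)"
    using Pi_asc[OF y i] Pi_desc[OF y i] by (cases "desc y i") (auto simp: add.commute)
  finally show ?thesis .
qed

lemma Lm_intertwine:
  "ncwf r p \<Longrightarrow> Lm (mapply (nceval (Wr r) (regL r) p) g) = mmul I (nceval I rho p) (Lm g)"
proof (induction p arbitrary: g)
  case (Gen i)
  then have i: "1 \<le> i" "i < r" by auto
  have "Lm (mapply (regL r i) g) = (\<Sum>x\<in>Wr r. \<Sum>y\<in>Wr r. msc (g y) (msc (regL r i x y) (Pi x)))"
    unfolding Lm_def mapply_def by (simp add: msc_sum_left mult.commute)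
  also have "\<dots> = (\<Sum>y\<in>Wr r. msc (g y) (\<Sum>x\<in>Wr r. msc (regL r i x y) (Pi x)))"
    by (subst sum.swap) (simp add: msc_sum_right)
  also have "\<dots> = (\<Sum>y\<in>Wr r. msc (g y) (mmul I (rho i) (Pi y)))"
    using regL_col[OF _ i] by simp
  also have "\<dots> = mmul I (rho i) (Lm g)"
    unfolding Lm_def by (simp add: mmul_sum_right mmul_msc_right)
  finally show ?case by simp
next
  case (Scal c)
  have "mapply (msc c (mid (Wr r))) g x = c * g x" if "x \<in> Wr r" for x
  proof -
    have "mapply (msc c (mid (Wr r))) g x = (\<Sum>y\<in>Wr r. if x = y then c * g y else 0)"
      unfolding mapply_def msc_def mid_def using that by (intro sum.cong) auto
    then show ?thesis using that by (simp add: finite_Wr)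
  qed
  then have "Lm (mapply (msc c (mid (Wr r))) g) = Lm (\<lambda>w. c * g w)"
    unfolding Lm_def by (intro sum.cong refl) auto
  also have "\<dots> = msc c (Lm g)"
    unfolding Lm_def by (simp add: msc_sum_right)
  also have "\<dots> = mmul I (msc c (mid I)) (Lm g)"
    using finI Lm_lin by (simp add: mmul_msc_left)
  finally show ?case by simp
next
  case (Plus a b)
  define A where "A = nceval (Wr r) (regL r) a"
  define B where "B = nceval (Wr r) (regL r) b"
  have m: "mapply (A + B) g = (\<lambda>x. mapply A g x + mapply B g x)"
    unfolding mapply_def by (simp add: distrib_right sum.distrib)
  have L: "Lm (\<lambda>x. G1 x + G2 x) = Lm G1 + Lm G2" for G1 G2
    unfolding Lm_def by (simp only: msc_add2 sum.distrib)
  have "Lm (mapply (nceval (Wr r) (regL r) (Plus a b)) g) = Lm (mapply A g) + Lm (mapply B g)"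
    by (simp only: nceval.simps A_def[symmetric] B_def[symmetric] m L)
  also have "\<dots> = mmul I (nceval I rho a) (Lm g) + mmul I (nceval I rho b) (Lm g)"
    using Plus.IH Plus.prems by (simp add: A_def B_def)
  also have "\<dots> = mmul I (nceval I rho (Plus a b)) (Lm g)"
    by (simp only: nceval.simps mmul_add_left)
  finally show ?case .
next
  case (Times a b)
  have "mapply (mmul (Wr r) (nceval (Wr r) (regL r) a) (nceval (Wr r) (regL r) b)) g =
        mapply (nceval (Wr r) (regL r) a) (mapply (nceval (Wr r) (regL r) b) g)"
  proof -
    have gen: "mapply (mmul (Wr r) A B) g = mapply A (mapply B g)" for A B :: "(nat \<Rightarrow> nat) lmap"
    proof (rule ext)
      fix x
      have "(\<Sum>y\<in>Wr r. (\<Sum>z\<in>Wr r. A x z * B z y) * g y) = (\<Sum>y\<in>Wr r. \<Sum>z\<in>Wr r. A x z * B z y * g y)"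
        by (simp add: sum_distrib_right)
      also have "\<dots> = (\<Sum>z\<in>Wr r. \<Sum>y\<in>Wr r. A x z * B z y * g y)" by (rule sum.swap)
      also have "\<dots> = (\<Sum>z\<in>Wr r. A x z * (\<Sum>y\<in>Wr r. B z y * g y))"
        by (simp add: sum_distrib_left mult.assoc)
      finally show "mapply (mmul (Wr r) A B) g x = mapply A (mapply B g) x"
        unfolding mapply_def mmul_def .
    qed
    show ?thesis by (rule gen)
  qed
  then show ?case using Times by (simp add: assoc3)
qed

lemma nceval_lin: "ncwf r p \<Longrightarrow> nceval I rho p \<in> lin I"
  by (induction p) (auto simp: rho_lin)

lemma factor_regL:
  assumes "ncwf r p"
  shows "nceval I rho p = Lm (\<lambda>x. nceval (Wr r) (regL r) p x id)"
proof -
  have "Lm (\<lambda>w. if w = id then 1 else 0) = (\<Sum>w\<in>Wr r. if w = id then Pi w else 0)"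
    unfolding Lm_def by (intro sum.cong) auto
  then have "Lm (\<lambda>w. if w = id then 1 else 0) = mid I"
    using Pi_id by (simp add: finite_Wr)
  moreover have "mapply (nceval (Wr r) (regL r) p) (\<lambda>w. if w = id then 1 else 0) =
      (\<lambda>x. nceval (Wr r) (regL r) p x id)"
    unfolding mapply_def by (simp add: if10_mult sum.delta finite_Wr cong: if_cong)
  ultimately show ?thesis
    using Lm_intertwine[OF assms, of "\<lambda>w. if w = id then 1 else 0"] nceval_lin[OF assms] finI
    by simp
qed

lemma factor:
  assumes "ncwf r p" "ncwf r p'" "nceval (Wr r) (regL r) p = nceval (Wr r) (regL r) p'"
  shows "nceval I rho p = nceval I rho p'"
  using factor_regL[OF assms(1)] factor_regL[OF assms(2)] assms(3) by simp

end

definition swp :: "nat \<Rightarrow> nat list \<Rightarrow> nat list" where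
  "swp i x = x[i - 1 := x ! i, i := x ! (i - 1)]"

lemma tidx_iff: "x \<in> tidx m r \<longleftrightarrow> length x = r \<and> (\<forall>j<r. 1 \<le> x ! j \<and> x ! j \<le> 2 * m)"
  unfolding tidx_def by (auto simp: set_conv_nth)

lemma finite_tidx: "finite (tidx m r)"
proof -
  have "tidx m r = {xs. set xs \<subseteq> {1..2*m} \<and> length xs = r}" by (auto simp: tidx_def)
  then show ?thesis using finite_lists_length_eq[of "{1..2*m}" r] by simp
qed

lemma length_swp[simp]: "length (swp i x) = length x"
  by (simp add: swp_def)

lemma nth_swp: "1 \<le> i \<Longrightarrow> i < length x \<Longrightarrow> j < length x \<Longrightarrow>
  swp i x ! j = (if j = i - 1 then x ! i else if j = i then x ! (i - 1) else x ! j)"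
  by (auto simp: swp_def nth_list_update)

lemma swp_swp[simp]: "1 \<le> i \<Longrightarrow> i < length x \<Longrightarrow> swp i (swp i x) = x"
  by (rule nth_equalityI) (auto simp: nth_swp)

lemma swp_eq_iff: "1 \<le> i \<Longrightarrow> i < length x \<Longrightarrow> (swp i x = x) = (x ! (i - 1) = x ! i)"
proof
  assume a: "1 \<le> i" "i < length x" "swp i x = x"
  have "swp i x ! i = x ! (i - 1)" using a(1,2) by (simp add: nth_swp)
  then show "x ! (i - 1) = x ! i" using a(3) by simp
next
  assume "1 \<le> i" "i < length x" "x ! (i - 1) = x ! i"
  then show "swp i x = x" by (intro nth_equalityI) (auto simp: nth_swp)
qed

lemma swp_eq_iff': "1 \<le> i \<Longrightarrow> i < length x \<Longrightarrow> (x = swp i x) = (x ! (i - 1) = x ! i)"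
  using swp_eq_iff by metis

lemma swp_tidx: "1 \<le> i \<Longrightarrow> i < r \<Longrightarrow> (swp i x \<in> tidx m r) = (x \<in> tidx m r)"
proof -
  assume i: "1 \<le> i" "i < r"
  have "length (swp i x) = r \<Longrightarrow> (\<forall>j<r. 1 \<le> swp i x ! j \<and> swp i x ! j \<le> 2 * m) = (\<forall>j<r. 1 \<le> x ! j \<and> x ! j \<le> 2 * m)"
  proof
    assume l: "length (swp i x) = r" and h: "\<forall>j<r. 1 \<le> swp i x ! j \<and> swp i x ! j \<le> 2 * m"
    show "\<forall>j<r. 1 \<le> x ! j \<and> x ! j \<le> 2 * m"
    proof (intro allI impI)
      fix j assume j: "j < r"
      have "x ! j = swp i x ! (transpose (i - 1) i j)"
        using i l j by (auto simp: nth_swp transpose_def)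
      moreover have "transpose (i - 1) i j < r" using i j by (auto simp: transpose_def)
      ultimately show "1 \<le> x ! j \<and> x ! j \<le> 2 * m" using h by simp
    qed
  next
    assume l: "length (swp i x) = r" and h: "\<forall>j<r. 1 \<le> x ! j \<and> x ! j \<le> 2 * m"
    show "\<forall>j<r. 1 \<le> swp i x ! j \<and> swp i x ! j \<le> 2 * m"
      using i l h by (auto simp: nth_swp)
  qed
  then show ?thesis by (auto simp: tidx_iff)
qed

definition dP :: "nat \<Rightarrow> nat \<Rightarrow> nat \<Rightarrow> K" where
  "dP m a b = (if a = b then psgn (odd_v m a) else (if a < b then 1 else -1) * cc / (qq + inverse qq))"

definition eP :: "nat \<Rightarrow> nat \<Rightarrow> nat \<Rightarrow> K" where
  "eP m a b = 2 * psgn (odd_v m a \<and> odd_v m b) / (qq + inverse qq)"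

lemma tprime_zero: "kl' \<noteq> kl \<Longrightarrow> kl' \<noteq> (snd kl, fst kl) \<Longrightarrow> tprime m kl' kl = 0"
  by (cases kl) (auto simp: tprime_def)

lemma tprime_diag: "tprime m (a, b) (a, b) = dP m a b"
  by (auto simp: tprime_def dP_def)

lemma tprime_off: "a \<noteq> b \<Longrightarrow> tprime m (a, b) (b, a) = eP m a b"
  by (auto simp: tprime_def eP_def conj_commute)

lemma piTp_entry:
  assumes x: "x \<in> tidx m r" and i: "1 \<le> i" "i < r"
  shows "piTp m r i x z = (if z = x then dP m (x ! (i - 1)) (x ! i) else 0)
     + (if z = swp i x \<and> x ! (i - 1) \<noteq> x ! i then eP m (x ! (i - 1)) (x ! i) else 0)"
proof -
  have lx: "length x = r" using x by (simp add: tidx_iff)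
  consider "z = x" | "z = swp i x \<and> x ! (i - 1) \<noteq> x ! i" | "z \<noteq> x \<and> \<not> (z = swp i x \<and> x ! (i - 1) \<noteq> x ! i)"
    by blast
  then show ?thesis
  proof cases
    case 1 then show ?thesis using x i lx by (simp add: piTp_def tprime_diag swp_eq_iff')
  next
    case 2
    have "z \<noteq> x" using 2 i lx swp_eq_iff[of i x] by auto
    moreover have "z \<in> tidx m r" using 2 x swp_tidx[OF i] by simp
    moreover have "\<forall>j<r. j \<noteq> i - 1 \<and> j \<noteq> i \<longrightarrow> x ! j = z ! j" using 2 i lx by (auto simp: nth_swp)
    ultimately show ?thesis using 2 x i lx by (simp add: piTp_def nth_swp tprime_off)
  next
    case 3
    show ?thesis
    proof (cases "z \<in> tidx m r \<and> (\<forall>j<r. j \<noteq> i - 1 \<and> j \<noteq> i \<longrightarrow> x ! j = z ! j)")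
      case True
      then have lz: "length z = r" by (simp add: tidx_iff)
      have n1: "(x ! (i - 1), x ! i) \<noteq> (z ! (i - 1), z ! i)"
      proof
        assume "(x ! (i - 1), x ! i) = (z ! (i - 1), z ! i)"
        then have e: "x ! (i - 1) = z ! (i - 1)" "x ! i = z ! i" by auto
        have "z ! j = x ! j" if "j < r" for j
          using that e True by (cases "j = i - 1"; cases "j = i") auto
        then have "z = x" using lx lz by (intro nth_equalityI) auto
        then show False using 3 by simp
      qed
      have n2: "(x ! (i - 1), x ! i) \<noteq> (z ! i, z ! (i - 1))"
      proof
        assume e: "(x ! (i - 1), x ! i) = (z ! i, z ! (i - 1))"
        have e2: "x ! (i - 1) = z ! i" "x ! i = z ! (i - 1)" using e by auto
        have "z ! j = swp i x ! j" if "j < r" for j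
          using that e2 True i lx by (cases "j = i - 1"; cases "j = i") (auto simp: nth_swp)
        then have "z = swp i x" using lx lz by (intro nth_equalityI) auto
        moreover have "x ! (i - 1) \<noteq> x ! i" using e n1 by auto
        ultimately show False using 3 by simp
      qed
      have tz: "tprime m (x ! (i - 1), x ! i) (z ! (i - 1), z ! i) = 0"
        by (rule tprime_zero[OF n1]) (use n2 in simp)
      have lhs: "piTp m r i x z = 0" using True x tz by (simp add: piTp_def)
      have n3: "\<not> (z = swp i x \<and> x ! (i - 1) \<noteq> x ! i)" and n4: "z \<noteq> x" using 3 by blast+
      show ?thesis by (simp only: if_not_P[OF n3] if_not_P[OF n4] lhs add_0)
    next
      case False
      then show ?thesis using 3 x by (auto simp: piTp_def)
    qed
  qed
qed

lemma piTp_lin: "piTp m r i \<in> lin (tidx m r)"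
  by (simp add: lin_def piTp_def)

lemma piTp_pull:
  assumes f: "f \<in> lin (tidx m r)" and i: "1 \<le> i" "i < r"
  shows "mmul (tidx m r) (piTp m r i) f x y = (if x \<in> tidx m r then
     dP m (x ! (i - 1)) (x ! i) * f x y
     + (if x ! (i - 1) \<noteq> x ! i then eP m (x ! (i - 1)) (x ! i) * f (swp i x) y else 0) else 0)"
proof (cases "x \<in> tidx m r")
  case False
  then show ?thesis by (simp add: mmul_def piTp_def)
next
  case True
  have sx: "swp i x \<in> tidx m r" using True swp_tidx[OF i] by simp
  have "mmul (tidx m r) (piTp m r i) f x y =
     (\<Sum>z\<in>tidx m r. (if z = x then dP m (x ! (i - 1)) (x ! i) * f z y else 0)
       + (if z = swp i x then (if x ! (i - 1) \<noteq> x ! i then eP m (x ! (i - 1)) (x ! i) * f z y else 0) else 0))"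
    unfolding mmul_def by (intro sum.cong refl) (auto simp: piTp_entry[OF True i] distrib_right)
  also have "\<dots> = dP m (x ! (i - 1)) (x ! i) * f x y
     + (if x ! (i - 1) \<noteq> x ! i then eP m (x ! (i - 1)) (x ! i) * f (swp i x) y else 0)"
    using True sx by (simp add: sum.distrib finite_tidx)
  finally show ?thesis using True by simp
qed

lemma piT_eq: "piT m r i = msc ((qq + inverse qq) / 2) (piTp m r i) + msc (cc / 2) (mid (tidx m r))"
  by (simp add: fun_eq_iff piT_def msc_def add_divide_distrib)

lemma piT_lin: "piT m r i \<in> lin (tidx m r)"
  unfolding piT_eq by (simp add: piTp_lin)

definition dT :: "nat \<Rightarrow> nat \<Rightarrow> nat \<Rightarrow> K" where
  "dT m a b = (if a = b then (if odd_v m a then - inverse qq else qq) else if a < b then cc else 0)"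

definition eps :: "nat \<Rightarrow> nat \<Rightarrow> nat \<Rightarrow> K" where
  "eps m a b = psgn (odd_v m a \<and> odd_v m b)"

lemma dT_dP: "(qq + inverse qq) / 2 * dP m a b + cc / 2 = dT m a b"
proof (cases "a = b")
  case True
  have "(qq + inverse qq) / 2 + (qq - inverse qq) / 2 = qq"
    "(- qq - inverse qq) / 2 + (qq - inverse qq) / 2 = - inverse qq"
    by (simp_all add: field_simps)
  then show ?thesis using True by (auto simp: dP_def dT_def psgn_def cc_def)
next
  case False
  have gen: "S \<noteq> 0 \<Longrightarrow> S / 2 * (X / S) = X / 2" for S X :: K by simp
  have "(qq + inverse qq) / 2 * dP m a b = (if a < b then 1 else -1) * cc / 2"
    using False gen[OF ss_nz] by (simp add: dP_def)
  then show ?thesis using False by (auto simp: dT_def)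
qed

lemma eps_eP: "(qq + inverse qq) / 2 * eP m a b = eps m a b"
  using ss_nz by (auto simp: eP_def eps_def field_simps)

lemma piT_pull:
  assumes f: "f \<in> lin (tidx m r)" and i: "1 \<le> i" "i < r"
  shows "mmul (tidx m r) (piT m r i) f x y = (if x \<in> tidx m r then
     dT m (x ! (i - 1)) (x ! i) * f x y
     + (if x ! (i - 1) \<noteq> x ! i then eps m (x ! (i - 1)) (x ! i) * f (swp i x) y else 0) else 0)"
proof -
  have "mmul (tidx m r) (piT m r i) f x y =
     (qq + inverse qq) / 2 * mmul (tidx m r) (piTp m r i) f x y + cc / 2 * f x y"
    unfolding piT_eq mmul_add_left mmul_msc_left mmul_mid_left[OF finite_tidx f] by (simp add: msc_def)
  also have "\<dots> = (if x \<in> tidx m r then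
     dT m (x ! (i - 1)) (x ! i) * f x y
     + (if x ! (i - 1) \<noteq> x ! i then eps m (x ! (i - 1)) (x ! i) * f (swp i x) y else 0) else 0)"
  proof (cases "x \<in> tidx m r")
    case False
    then show ?thesis unfolding piTp_pull[OF f i] using f by (simp add: linD1)
  next
    case True
    have ring: "S * (D * F + E) + C * F = (S * D + C) * F + S * E" for S D F E C :: K
      by (simp add: algebra_simps)
    have ring2: "S * (if P then A * G else 0) = (if P then (S * A) * G else (0::K))" for S P A G
      by simp
    show ?thesis unfolding piTp_pull[OF f i] using True
      by (simp only: if_True ring ring2 dT_dP eps_eP)
  qed
  finally show ?thesis .
qed

definition T1 :: "nat \<Rightarrow> (nat \<Rightarrow> nat \<Rightarrow> nat \<Rightarrow> K) \<Rightarrow> nat \<Rightarrow> nat \<Rightarrow> nat \<Rightarrow> K" where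
  "T1 m F u v w = dT m u v * F u v w + (if u \<noteq> v then eps m u v * F v u w else 0)"
definition T2 :: "nat \<Rightarrow> (nat \<Rightarrow> nat \<Rightarrow> nat \<Rightarrow> K) \<Rightarrow> nat \<Rightarrow> nat \<Rightarrow> nat \<Rightarrow> K" where
  "T2 m F u v w = dT m v w * F u v w + (if v \<noteq> w then eps m v w * F u w v else 0)"


lemma ybe0: "a < b \<Longrightarrow> b < c \<Longrightarrow> T1 m (T2 m (T1 m F)) a b c = T2 m (T1 m (T2 m F)) a b c"
  using qq_nz by (cases "odd_v m a"; cases "odd_v m b"; cases "odd_v m c")
    (simp_all add: T1_def T2_def dT_def eps_def psgn_def odd_v_def cc_def field_simps)

lemma ybe1: "a < c \<Longrightarrow> c < b \<Longrightarrow> T1 m (T2 m (T1 m F)) a b c = T2 m (T1 m (T2 m F)) a b c"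
  using qq_nz by (cases "odd_v m a"; cases "odd_v m b"; cases "odd_v m c")
    (simp_all add: T1_def T2_def dT_def eps_def psgn_def odd_v_def cc_def field_simps)

lemma ybe2: "b < a \<Longrightarrow> a < c \<Longrightarrow> T1 m (T2 m (T1 m F)) a b c = T2 m (T1 m (T2 m F)) a b c"
  using qq_nz by (cases "odd_v m a"; cases "odd_v m b"; cases "odd_v m c")
    (simp_all add: T1_def T2_def dT_def eps_def psgn_def odd_v_def cc_def field_simps)

lemma ybe3: "b < c \<Longrightarrow> c < a \<Longrightarrow> T1 m (T2 m (T1 m F)) a b c = T2 m (T1 m (T2 m F)) a b c"
  using qq_nz by (cases "odd_v m a"; cases "odd_v m b"; cases "odd_v m c")
    (simp_all add: T1_def T2_def dT_def eps_def psgn_def odd_v_def cc_def field_simps)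

lemma ybe4: "c < a \<Longrightarrow> a < b \<Longrightarrow> T1 m (T2 m (T1 m F)) a b c = T2 m (T1 m (T2 m F)) a b c"
  using qq_nz by (cases "odd_v m a"; cases "odd_v m b"; cases "odd_v m c")
    (simp_all add: T1_def T2_def dT_def eps_def psgn_def odd_v_def cc_def field_simps)

lemma ybe5: "c < b \<Longrightarrow> b < a \<Longrightarrow> T1 m (T2 m (T1 m F)) a b c = T2 m (T1 m (T2 m F)) a b c"
  using qq_nz by (cases "odd_v m a"; cases "odd_v m b"; cases "odd_v m c")
    (simp_all add: T1_def T2_def dT_def eps_def psgn_def odd_v_def cc_def field_simps)

lemma ybe6: "a = b \<Longrightarrow> b < c \<Longrightarrow> T1 m (T2 m (T1 m F)) a b c = T2 m (T1 m (T2 m F)) a b c"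
  using qq_nz by (cases "odd_v m a"; cases "odd_v m b"; cases "odd_v m c")
    (simp_all add: T1_def T2_def dT_def eps_def psgn_def odd_v_def cc_def field_simps)

lemma ybe7: "a = b \<Longrightarrow> c < b \<Longrightarrow> T1 m (T2 m (T1 m F)) a b c = T2 m (T1 m (T2 m F)) a b c"
  using qq_nz by (cases "odd_v m a"; cases "odd_v m b"; cases "odd_v m c")
    (simp_all add: T1_def T2_def dT_def eps_def psgn_def odd_v_def cc_def field_simps)

lemma ybe8: "a = c \<Longrightarrow> c < b \<Longrightarrow> T1 m (T2 m (T1 m F)) a b c = T2 m (T1 m (T2 m F)) a b c"
  using qq_nz by (cases "odd_v m a"; cases "odd_v m b"; cases "odd_v m c")
    (simp_all add: T1_def T2_def dT_def eps_def psgn_def odd_v_def cc_def field_simps)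

lemma ybe9: "a = c \<Longrightarrow> b < c \<Longrightarrow> T1 m (T2 m (T1 m F)) a b c = T2 m (T1 m (T2 m F)) a b c"
  using qq_nz by (cases "odd_v m a"; cases "odd_v m b"; cases "odd_v m c")
    (simp_all add: T1_def T2_def dT_def eps_def psgn_def odd_v_def cc_def field_simps)

lemma ybe10: "b = c \<Longrightarrow> c < a \<Longrightarrow> T1 m (T2 m (T1 m F)) a b c = T2 m (T1 m (T2 m F)) a b c"
  using qq_nz by (cases "odd_v m a"; cases "odd_v m b"; cases "odd_v m c")
    (simp_all add: T1_def T2_def dT_def eps_def psgn_def odd_v_def cc_def field_simps)

lemma ybe11: "b = c \<Longrightarrow> a < c \<Longrightarrow> T1 m (T2 m (T1 m F)) a b c = T2 m (T1 m (T2 m F)) a b c"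
  using qq_nz by (cases "odd_v m a"; cases "odd_v m b"; cases "odd_v m c")
    (simp_all add: T1_def T2_def dT_def eps_def psgn_def odd_v_def cc_def field_simps)

lemma ybe12: "a = b \<Longrightarrow> b = c \<Longrightarrow> T1 m (T2 m (T1 m F)) a b c = T2 m (T1 m (T2 m F)) a b c"
  using qq_nz by (cases "odd_v m a"; cases "odd_v m b"; cases "odd_v m c")
    (simp_all add: T1_def T2_def dT_def eps_def psgn_def odd_v_def cc_def field_simps)

lemma ybe: "T1 m (T2 m (T1 m F)) a b c = T2 m (T1 m (T2 m F)) a b c"
proof (cases a b rule: linorder_cases)
  case less
  show ?thesis
  proof (cases b c rule: linorder_cases)
    case less then show ?thesis using \<open>a < b\<close> by (rule ybe0[rotated])
  next
    case equal then show ?thesis using \<open>a < b\<close> by (intro ybe11) simp_all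
  next
    case greater
    show ?thesis using greater \<open>a < b\<close> by (cases a c rule: linorder_cases) (auto intro: ybe1 ybe8 ybe4)
  qed
next
  case equal
  show ?thesis using equal by (cases b c rule: linorder_cases) (auto intro: ybe6 ybe7 ybe12)
next
  case greater
  show ?thesis
  proof (cases b c rule: linorder_cases)
    case less
    show ?thesis using less greater by (cases a c rule: linorder_cases) (auto intro: ybe2 ybe9 ybe3)
  next
    case equal then show ?thesis using greater by (intro ybe10) simp_all
  next
    case greater then show ?thesis using \<open>b < a\<close> by (intro ybe5) simp_all
  qed
qed
section \<open>Lifting to three tensor positions\<close>

definition put3 :: "nat list \<Rightarrow> nat \<Rightarrow> nat \<Rightarrow> nat \<Rightarrow> nat \<Rightarrow> nat list" where
  "put3 x p u v w = x[p := u, Suc p := v, Suc (Suc p) := w]"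

lemma length_put3[simp]: "length (put3 x p u v w) = length x"
  by (simp add: put3_def)

lemma nth_put3: "Suc (Suc p) < length x \<Longrightarrow> j < length x \<Longrightarrow> put3 x p u v w ! j =
  (if j = p then u else if j = Suc p then v else if j = Suc (Suc p) then w else x ! j)"
  by (auto simp: put3_def nth_list_update)

lemma put3_self: "Suc (Suc p) < length x \<Longrightarrow> put3 x p (x ! p) (x ! Suc p) (x ! Suc (Suc p)) = x"
  by (rule nth_equalityI) (auto simp: nth_put3)

lemma swp1_put3: "Suc (Suc p) < length x \<Longrightarrow> swp (Suc p) (put3 x p u v w) = put3 x p v u w"
  by (rule nth_equalityI) (auto simp: nth_put3 nth_swp)

lemma swp2_put3: "Suc (Suc p) < length x \<Longrightarrow> swp (Suc (Suc p)) (put3 x p u v w) = put3 x p u w v"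
  by (rule nth_equalityI) (auto simp: nth_put3 nth_swp)

lemma put3_tidx: assumes "x \<in> tidx m r" "Suc (Suc p) < r"
  shows "put3 x p u v w \<in> tidx m r \<longleftrightarrow> u \<in> {1..2*m} \<and> v \<in> {1..2*m} \<and> w \<in> {1..2*m}"
proof -
  have l: "length x = r" using assms by (simp add: tidx_iff)
  show ?thesis
  proof
    assume "put3 x p u v w \<in> tidx m r"
    then have "\<forall>j<r. 1 \<le> put3 x p u v w ! j \<and> put3 x p u v w ! j \<le> 2 * m" by (simp add: tidx_iff)
    then show "u \<in> {1..2*m} \<and> v \<in> {1..2*m} \<and> w \<in> {1..2*m}"
      using assms l by (auto simp: nth_put3 dest: spec[of _ p] spec[of _ "Suc p"] spec[of _ "Suc (Suc p)"])
  next
    assume "u \<in> {1..2*m} \<and> v \<in> {1..2*m} \<and> w \<in> {1..2*m}"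
    then show "put3 x p u v w \<in> tidx m r" using assms l by (auto simp: tidx_iff nth_put3)
  qed
qed

definition Lf :: "nat list \<Rightarrow> nat \<Rightarrow> nat list \<Rightarrow> nat list lmap \<Rightarrow> nat \<Rightarrow> nat \<Rightarrow> nat \<Rightarrow> K" where
  "Lf x p y g = (\<lambda>u v w. g (put3 x p u v w) y)"

lemma lift_T1:
  assumes x: "x \<in> tidx m r" and p: "Suc (Suc p) < r" and g: "g \<in> lin (tidx m r)"
  shows "Lf x p y (mmul (tidx m r) (piT m r (Suc p)) g) = T1 m (Lf x p y g)"
proof (intro ext)
  fix u v w
  have l: "length x = r" using x by (simp add: tidx_iff)
  show "Lf x p y (mmul (tidx m r) (piT m r (Suc p)) g) u v w = T1 m (Lf x p y g) u v w"
  proof (cases "put3 x p u v w \<in> tidx m r")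
    case True
    then show ?thesis using p l unfolding Lf_def T1_def
      by (simp add: piT_pull[OF g] nth_put3 swp1_put3)
  next
    case False
    then have "put3 x p v u w \<notin> tidx m r" using put3_tidx[OF x p] by auto
    then show ?thesis using False p l g unfolding Lf_def T1_def
      by (simp add: piT_pull[OF g] linD1)
  qed
qed

lemma lift_T2:
  assumes x: "x \<in> tidx m r" and p: "Suc (Suc p) < r" and g: "g \<in> lin (tidx m r)"
  shows "Lf x p y (mmul (tidx m r) (piT m r (Suc (Suc p))) g) = T2 m (Lf x p y g)"
proof (intro ext)
  fix u v w
  have l: "length x = r" using x by (simp add: tidx_iff)
  show "Lf x p y (mmul (tidx m r) (piT m r (Suc (Suc p))) g) u v w = T2 m (Lf x p y g) u v w"
  proof (cases "put3 x p u v w \<in> tidx m r")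
    case True
    then show ?thesis using p l unfolding Lf_def T2_def
      by (simp add: piT_pull[OF g] nth_put3 swp2_put3)
  next
    case False
    then have "put3 x p u w v \<notin> tidx m r" using put3_tidx[OF x p] by auto
    then show ?thesis using False p l g unfolding Lf_def T2_def
      by (simp add: piT_pull[OF g] linD1)
  qed
qed

lemma mmul_piT_lin: "g \<in> lin (tidx m r) \<Longrightarrow> mmul (tidx m r) (piT m r i) g \<in> lin (tidx m r)"
  by (simp add: piT_lin)

lemma piT_braid_op:
  assumes i: "1 \<le> i" "i + 1 < r" and f: "f \<in> lin (tidx m r)"
  shows "mmul (tidx m r) (piT m r i) (mmul (tidx m r) (piT m r (i + 1)) (mmul (tidx m r) (piT m r i) f))
       = mmul (tidx m r) (piT m r (i + 1)) (mmul (tidx m r) (piT m r i) (mmul (tidx m r) (piT m r (i + 1)) f))"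
proof (intro ext)
  fix x y
  obtain p where pi: "i = Suc p" using i by (metis Suc_le_D One_nat_def)
  have p: "Suc (Suc p) < r" using i pi by simp
  show "mmul (tidx m r) (piT m r i) (mmul (tidx m r) (piT m r (i + 1)) (mmul (tidx m r) (piT m r i) f)) x y
       = mmul (tidx m r) (piT m r (i + 1)) (mmul (tidx m r) (piT m r i) (mmul (tidx m r) (piT m r (i + 1)) f)) x y"
  proof (cases "x \<in> tidx m r")
    case False
    then show ?thesis by (simp add: mmul_def linD1[OF piT_lin])
  next
    case x: True
    have l: "length x = r" using x by (simp add: tidx_iff)
    have e: "G x y = Lf x p y G (x ! p) (x ! Suc p) (x ! Suc (Suc p))" for G
      unfolding Lf_def using put3_self[of p x] p l by simp
    have L1: "Lf x p y (mmul (tidx m r) (piT m r i) (mmul (tidx m r) (piT m r (i + 1)) (mmul (tidx m r) (piT m r i) f)))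
        = T1 m (T2 m (T1 m (Lf x p y f)))"
      unfolding pi using f p x by (simp add: lift_T1 lift_T2 mmul_piT_lin)
    have L2: "Lf x p y (mmul (tidx m r) (piT m r (i + 1)) (mmul (tidx m r) (piT m r i) (mmul (tidx m r) (piT m r (i + 1)) f)))
        = T2 m (T1 m (T2 m (Lf x p y f)))"
      unfolding pi using f p x by (simp add: lift_T1 lift_T2 mmul_piT_lin)
    show ?thesis by (subst (1 2) e) (simp only: L1 L2 ybe)
  qed
qed

definition T0 :: "nat \<Rightarrow> (nat \<Rightarrow> nat \<Rightarrow> K) \<Rightarrow> nat \<Rightarrow> nat \<Rightarrow> K" where
  "T0 m F u v = dT m u v * F u v + (if u \<noteq> v then eps m u v * F v u else 0)"

lemma T0_quad: "T0 m (T0 m F) a b = cc * T0 m F a b + F a b"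
  using qq_nz by (cases a b rule: linorder_cases; cases "odd_v m a"; cases "odd_v m b")
    (simp_all add: T0_def dT_def eps_def psgn_def cc_def field_simps)

definition put2 :: "nat list \<Rightarrow> nat \<Rightarrow> nat \<Rightarrow> nat \<Rightarrow> nat list" where
  "put2 x p u v = x[p := u, Suc p := v]"

lemma length_put2[simp]: "length (put2 x p u v) = length x"
  by (simp add: put2_def)

lemma nth_put2: "Suc p < length x \<Longrightarrow> j < length x \<Longrightarrow> put2 x p u v ! j =
  (if j = p then u else if j = Suc p then v else x ! j)"
  by (auto simp: put2_def nth_list_update)

lemma put2_self: "Suc p < length x \<Longrightarrow> put2 x p (x ! p) (x ! Suc p) = x"
  by (rule nth_equalityI) (auto simp: nth_put2)

lemma swp_put2: "Suc p < length x \<Longrightarrow> swp (Suc p) (put2 x p u v) = put2 x p v u"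
  by (rule nth_equalityI) (auto simp: put2_def nth_swp nth_list_update)

lemma put2_tidx: assumes "x \<in> tidx m r" "Suc p < r"
  shows "put2 x p u v \<in> tidx m r \<longleftrightarrow> u \<in> {1..2*m} \<and> v \<in> {1..2*m}"
proof -
  have l: "length x = r" using assms by (simp add: tidx_iff)
  show ?thesis
  proof
    assume "put2 x p u v \<in> tidx m r"
    then have "\<forall>j<r. 1 \<le> put2 x p u v ! j \<and> put2 x p u v ! j \<le> 2 * m" by (simp add: tidx_iff)
    then show "u \<in> {1..2*m} \<and> v \<in> {1..2*m}"
      using assms l by (auto simp: nth_put2 dest: spec[of _ p] spec[of _ "Suc p"])
  next
    assume "u \<in> {1..2*m} \<and> v \<in> {1..2*m}"
    then show "put2 x p u v \<in> tidx m r" using assms l by (auto simp: tidx_iff nth_put2)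
  qed
qed

definition Lf2 :: "nat list \<Rightarrow> nat \<Rightarrow> nat list \<Rightarrow> nat list lmap \<Rightarrow> nat \<Rightarrow> nat \<Rightarrow> K" where
  "Lf2 x p y g = (\<lambda>u v. g (put2 x p u v) y)"

lemma lift_T0:
  assumes x: "x \<in> tidx m r" and p: "Suc p < r" and g: "g \<in> lin (tidx m r)"
  shows "Lf2 x p y (mmul (tidx m r) (piT m r (Suc p)) g) = T0 m (Lf2 x p y g)"
proof (intro ext)
  fix u v
  have l: "length x = r" using x by (simp add: tidx_iff)
  show "Lf2 x p y (mmul (tidx m r) (piT m r (Suc p)) g) u v = T0 m (Lf2 x p y g) u v"
  proof (cases "put2 x p u v \<in> tidx m r")
    case True
    then show ?thesis using p l unfolding Lf2_def T0_def
      by (simp add: piT_pull[OF g] nth_put2 swp_put2)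
  next
    case False
    then have "put2 x p v u \<notin> tidx m r" using put2_tidx[OF x p] by auto
    then show ?thesis using False p l g unfolding Lf2_def T0_def
      by (simp add: piT_pull[OF g] linD1)
  qed
qed

lemma piT_quad_op:
  assumes i: "1 \<le> i" "i < r" and f: "f \<in> lin (tidx m r)"
  shows "mmul (tidx m r) (piT m r i) (mmul (tidx m r) (piT m r i) f)
       = msc cc (mmul (tidx m r) (piT m r i) f) + f"
proof (intro ext)
  fix x y
  obtain p where pi: "i = Suc p" using i by (metis Suc_le_D One_nat_def)
  have p: "Suc p < r" using i pi by simp
  show "mmul (tidx m r) (piT m r i) (mmul (tidx m r) (piT m r i) f) x y
       = (msc cc (mmul (tidx m r) (piT m r i) f) + f) x y"
  proof (cases "x \<in> tidx m r")
    case False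
    then show ?thesis using f by (simp add: mmul_def linD1[OF piT_lin] msc_def linD1)
  next
    case x: True
    have l: "length x = r" using x by (simp add: tidx_iff)
    have e: "G x y = Lf2 x p y G (x ! p) (x ! Suc p)" for G
      unfolding Lf2_def using put2_self[of p x] p l by simp
    have L1: "Lf2 x p y (mmul (tidx m r) (piT m r i) (mmul (tidx m r) (piT m r i) f)) = T0 m (T0 m (Lf2 x p y f))"
      unfolding pi using f p x by (simp add: lift_T0 mmul_piT_lin)
    have L2: "Lf2 x p y (mmul (tidx m r) (piT m r i) f) = T0 m (Lf2 x p y f)"
      unfolding pi using f p x by (simp add: lift_T0)
    have "mmul (tidx m r) (piT m r i) (mmul (tidx m r) (piT m r i) f) x y =
       cc * mmul (tidx m r) (piT m r i) f x y + f x y"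
      using e[of "mmul (tidx m r) (piT m r i) (mmul (tidx m r) (piT m r i) f)"]
        e[of "mmul (tidx m r) (piT m r i) f"] e[of f]
      by (simp only: L1 L2 T0_quad)
    then show ?thesis by (simp add: msc_def)
  qed
qed

lemma piT_comm_op:
  assumes i: "1 \<le> i" "i + 1 < j" "j < r" and f: "f \<in> lin (tidx m r)"
  shows "mmul (tidx m r) (piT m r i) (mmul (tidx m r) (piT m r j) f)
       = mmul (tidx m r) (piT m r j) (mmul (tidx m r) (piT m r i) f)"
proof (intro ext)
  fix x y
  have i1: "1 \<le> i" "i < r" and j1: "1 \<le> j" "j < r" using i by auto
  show "mmul (tidx m r) (piT m r i) (mmul (tidx m r) (piT m r j) f) x y
       = mmul (tidx m r) (piT m r j) (mmul (tidx m r) (piT m r i) f) x y"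
  proof (cases "x \<in> tidx m r")
    case False
    then show ?thesis by (simp add: mmul_def linD1[OF piT_lin])
  next
    case x: True
    have l: "length x = r" using x by (simp add: tidx_iff)
    have si: "swp i x \<in> tidx m r" using x swp_tidx[OF i1] by simp
    have sj: "swp j x \<in> tidx m r" using x swp_tidx[OF j1] by simp
    have c: "swp i (swp j x) = swp j (swp i x)"
      using i l by (intro nth_equalityI) (auto simp: nth_swp)
    have n: "swp i x ! (j - Suc 0) = x ! (j - Suc 0)" "swp i x ! j = x ! j"
       "swp j x ! (i - Suc 0) = x ! (i - Suc 0)" "swp j x ! i = x ! i"
      using i l by (auto simp: nth_swp)
    show ?thesis
      using x si sj unfolding piT_pull[OF mmul_piT_lin[OF f] i1] piT_pull[OF mmul_piT_lin[OF f] j1]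
      apply (simp add: piT_pull[OF f i1] piT_pull[OF f j1] n c)
      apply (simp add: distrib_left distrib_right mult.commute mult.left_commute mult.assoc add.commute add.left_commute add.assoc)
      done
  qed
qed

lemma mmul_piT_mid: "mmul (tidx m r) (piT m r i) (mid (tidx m r)) = piT m r i"
  by (simp add: finite_tidx piT_lin)

lemma hrep_piT: "hrep (tidx m r) r (piT m r)"
proof
  show "finite (tidx m r)" by (rule finite_tidx)
  show "piT m r i \<in> lin (tidx m r)" for i by (rule piT_lin)
  show "mmul (tidx m r) (piT m r i) (piT m r i) = msc cc (piT m r i) + mid (tidx m r)"
    if "1 \<le> i" "i < r" for i
    using piT_quad_op[OF that lin_mid] by (simp add: mmul_piT_mid)
  show "mmul (tidx m r) (piT m r i) (mmul (tidx m r) (piT m r (i + 1)) (piT m r i)) =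
        mmul (tidx m r) (piT m r (i + 1)) (mmul (tidx m r) (piT m r i) (piT m r (i + 1)))"
    if "1 \<le> i" "i + 1 < r" for i
    using piT_braid_op[OF that lin_mid] by (simp add: mmul_piT_mid)
  show "mmul (tidx m r) (piT m r i) (piT m r j) = mmul (tidx m r) (piT m r j) (piT m r i)"
    if "1 \<le> i" "i + 1 < j" "j < r" for i j
    using piT_comm_op[OF that lin_mid] by (simp add: mmul_piT_mid)
qed

section \<open>The map phi\<close>

definition bar :: "nat \<Rightarrow> nat list \<Rightarrow> nat list" where
  "bar m x = map (phiv m) x"

definition ov :: "nat \<Rightarrow> nat \<Rightarrow> nat" where
  "ov m k = (if odd_v m k then 1 else 0)"

definition sgE :: "nat \<Rightarrow> nat \<Rightarrow> nat list \<Rightarrow> nat" where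
  "sgE m r y = (\<Sum>i\<in>{1..<r}. \<Sum>j<i. ov m (y ! j))"

lemma phiT_alt: "phiT m r x y = (if y \<in> tidx m r \<and> x = bar m y then (-1) ^ sgE m r y else 0)"
  by (simp add: phiT_def bar_def sgE_def ov_def)

lemma phiv_range: "k \<in> {1..2*m} \<Longrightarrow> phiv m k \<in> {1..2*m}"
  by (auto simp: phiv_def)

lemma phiv_phiv: "k \<in> {1..2*m} \<Longrightarrow> phiv m (phiv m k) = k"
  by (auto simp: phiv_def)

lemma odd_phiv: "k \<in> {1..2*m} \<Longrightarrow> odd_v m (phiv m k) = (\<not> odd_v m k)"
  by (auto simp: phiv_def odd_v_def)

lemma phiv_less: "k \<in> {1..2*m} \<Longrightarrow> l \<in> {1..2*m} \<Longrightarrow> (phiv m k < phiv m l) = (l < k)"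
  by (auto simp: phiv_def)

lemma phiv_eq: "k \<in> {1..2*m} \<Longrightarrow> l \<in> {1..2*m} \<Longrightarrow> (phiv m k = phiv m l) = (k = l)"
  by (auto simp: phiv_def)

lemma bar_tidx: "x \<in> tidx m r \<Longrightarrow> bar m x \<in> tidx m r"
  unfolding tidx_iff bar_def by (auto simp: phiv_def)

lemma bar_bar: "x \<in> tidx m r \<Longrightarrow> bar m (bar m x) = x"
  by (auto simp: tidx_def bar_def phiv_phiv intro!: map_idI)

lemma nth_bar: "j < length x \<Longrightarrow> bar m x ! j = phiv m (x ! j)"
  by (simp add: bar_def)

lemma bar_swp: "1 \<le> i \<Longrightarrow> i < length x \<Longrightarrow> bar m (swp i x) = swp i (bar m x)"
  by (auto simp: bar_def swp_def map_update)

lemma phiT_lin: "phiT m r \<in> lin (tidx m r)"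
  by (auto simp: lin_def phiT_alt bar_tidx)

lemma phiT_pull:
  "mmul (tidx m r) (phiT m r) f x y =
     (if x \<in> tidx m r then (-1) ^ sgE m r (bar m x) * f (bar m x) y else 0)"
proof (cases "x \<in> tidx m r")
  case False
  have "phiT m r x z = 0" for z
    using False bar_tidx by (auto simp: phiT_alt)
  then show ?thesis using False by (simp add: mmul_def)
next
  case True
  have "phiT m r x z = (if z = bar m x then (-1) ^ sgE m r (bar m x) else 0)" for z
    using True bar_tidx bar_bar by (auto simp: phiT_alt)
  then have "mmul (tidx m r) (phiT m r) f x y = (\<Sum>z\<in>tidx m r. if z = bar m x then (-1) ^ sgE m r (bar m x) * f z y else 0)"
    unfolding mmul_def by (intro sum.cong) auto
  then show ?thesis using True bar_tidx[OF True] by (simp add: finite_tidx)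
qed

lemma sum_swp_inv:
  assumes i: "1 \<le> i" "i < k" "k \<le> length z"
  shows "(\<Sum>j<k. ov m (swp i z ! j)) = (\<Sum>j<k. ov m (z ! j))"
proof -
  have p: "transpose (i - 1) i permutes {..<k}" using i by (intro permutes_swap_id) auto
  have "(\<Sum>j<k. ov m (z ! j)) = (\<Sum>j<k. ov m (z ! transpose (i - 1) i j))"
    using sum.permute[OF p, of "\<lambda>j. ov m (z ! j)"] by (simp add: o_def)
  also have "\<dots> = (\<Sum>j<k. ov m (swp i z ! j))"
    using i by (intro sum.cong refl) (auto simp: nth_swp transpose_def)
  finally show ?thesis by simp
qed

lemma sgE_swp:
  assumes z: "length z = r" and i: "1 \<le> i" "i < r"
  shows "sgE m r (swp i z) + ov m (z ! (i - 1)) = sgE m r z + ov m (z ! i)"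
proof -
  have fin: "finite {1..<r}" by simp
  have ir: "i \<in> {1..<r}" using i by simp
  have rest: "(\<Sum>k\<in>{1..<r} - {i}. \<Sum>j<k. ov m (swp i z ! j)) = (\<Sum>k\<in>{1..<r} - {i}. \<Sum>j<k. ov m (z ! j))"
  proof (rule sum.cong[OF refl])
    fix k assume k: "k \<in> {1..<r} - {i}"
    show "(\<Sum>j<k. ov m (swp i z ! j)) = (\<Sum>j<k. ov m (z ! j))"
    proof (cases "k < i")
      case True
      then show ?thesis using i z k by (intro sum.cong refl) (auto simp: nth_swp)
    next
      case False
      then show ?thesis using i z k by (intro sum_swp_inv) auto
    qed
  qed
  have at_i: "(\<Sum>j<i. ov m (swp i z ! j)) + ov m (z ! (i - 1)) = (\<Sum>j<i. ov m (z ! j)) + ov m (z ! i)"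
  proof -
    obtain p where p: "i = Suc p" using i by (metis Suc_le_D One_nat_def)
    have "(\<Sum>j<p. ov m (swp i z ! j)) = (\<Sum>j<p. ov m (z ! j))"
      using i z p by (intro sum.cong refl) (auto simp: nth_swp)
    moreover have "swp i z ! p = z ! i" using i z p by (simp add: nth_swp)
    ultimately show ?thesis using p by simp
  qed
  show ?thesis
    unfolding sgE_def using sum.remove[OF fin ir, of "\<lambda>k. \<Sum>j<k. ov m (swp i z ! j)"]
      sum.remove[OF fin ir, of "\<lambda>k. \<Sum>j<k. ov m (z ! j)"] rest at_i by simp
qed

lemma sign_swp:
  assumes z: "length z = r" and i: "1 \<le> i" "i < r"
  shows "((-1::K) ^ sgE m r (swp i z)) = (-1) ^ sgE m r z * (-1) ^ ov m (z ! (i - 1)) * (-1) ^ ov m (z ! i)"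
proof -
  have "((-1::K) ^ sgE m r (swp i z)) = (-1) ^ sgE m r (swp i z) * ((-1) ^ ov m (z ! (i - 1)) * (-1) ^ ov m (z ! (i - 1)))"
    by (simp add: power_add[symmetric] power_mult_distrib[symmetric])
  also have "\<dots> = (-1) ^ (sgE m r (swp i z) + ov m (z ! (i - 1))) * (-1) ^ ov m (z ! (i - 1))"
    by (simp add: power_add)
  also have "\<dots> = (-1) ^ (sgE m r z + ov m (z ! i)) * (-1) ^ ov m (z ! (i - 1))"
    by (simp only: sgE_swp[OF assms])
  finally show ?thesis by (simp add: power_add)
qed

lemma sgE_bar:
  assumes x: "x \<in> tidx m r"
  shows "sgE m r x + sgE m r (bar m x) = r * (r - 1) div 2"
proof -
  have l: "length x = r" using x by (simp add: tidx_iff)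
  have "sgE m r x + sgE m r (bar m x) = (\<Sum>k\<in>{1..<r}. \<Sum>j<k. ov m (x ! j) + ov m (bar m x ! j))"
    unfolding sgE_def by (simp add: sum.distrib)
  also have "\<dots> = (\<Sum>k\<in>{1..<r}. \<Sum>j<k. 1)"
  proof (intro sum.cong refl)
    fix k j assume k: "k \<in> {1..<r}" and j: "j \<in> {..<k}"
    then have "x ! j \<in> {1..2*m}" using x by (auto simp: tidx_iff)
    then show "ov m (x ! j) + ov m (bar m x ! j) = 1"
      using j k l by (auto simp: nth_bar odd_phiv ov_def)
  qed
  also have "\<dots> = \<Sum>{1..<r}" by simp
  also have "\<dots> = r * (r - 1) div 2" by (simp add: Sum_Ico_nat)
  finally show ?thesis .
qed

lemma K1: assumes "a \<in> {1..2*m}" "b \<in> {1..2*m}"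
  shows "dT m (phiv m a) (phiv m b) = cc - dT m a b"
  using assms
  by (cases a b rule: linorder_cases)
    (auto simp: dT_def phiv_less phiv_eq odd_phiv cc_def)

lemma K2: assumes "a \<in> {1..2*m}" "b \<in> {1..2*m}"
  shows "eps m (phiv m a) (phiv m b) = - eps m a b * (-1) ^ ov m (phiv m a) * (-1) ^ ov m (phiv m b)"
  using assms
  by (cases "odd_v m a"; cases "odd_v m b") (auto simp: eps_def psgn_def ov_def odd_phiv)

abbreviation sig :: "nat \<Rightarrow> K" where
  "sig r \<equiv> (-1) ^ (r * (r - 1) div 2)"

lemma phi_sq_op:
  assumes f: "f \<in> lin (tidx m r)"
  shows "mmul (tidx m r) (phiT m r) (mmul (tidx m r) (phiT m r) f) = msc (sig r) f"
proof (intro ext)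
  fix x y
  show "mmul (tidx m r) (phiT m r) (mmul (tidx m r) (phiT m r) f) x y = msc (sig r) f x y"
  proof (cases "x \<in> tidx m r")
    case False
    then show ?thesis using f by (simp add: phiT_pull msc_def linD1)
  next
    case True
    have "(-1::K) ^ sgE m r (bar m x) * (-1) ^ sgE m r x = sig r"
      using sgE_bar[OF True] by (simp add: power_add[symmetric] add.commute)
    then show ?thesis using True bar_tidx[OF True] bar_bar[OF True]
      by (simp add: phiT_pull msc_def mult.assoc[symmetric])
  qed
qed

lemma phi_T_op:
  assumes i: "1 \<le> i" "i < r" and f: "f \<in> lin (tidx m r)"
  shows "mmul (tidx m r) (phiT m r) (mmul (tidx m r) (piT m r i) f)
    = msc cc (mmul (tidx m r) (phiT m r) f) - mmul (tidx m r) (piT m r i) (mmul (tidx m r) (phiT m r) f)"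
proof (intro ext)
  fix x y
  have fl: "mmul (tidx m r) (phiT m r) f \<in> lin (tidx m r)" using f phiT_lin by simp
  show "mmul (tidx m r) (phiT m r) (mmul (tidx m r) (piT m r i) f) x y
    = (msc cc (mmul (tidx m r) (phiT m r) f) - mmul (tidx m r) (piT m r i) (mmul (tidx m r) (phiT m r) f)) x y"
  proof (cases "x \<in> tidx m r")
    case False
    then show ?thesis using f fl by (simp add: phiT_pull msc_def piT_pull[OF fl i] linD1)
  next
    case x: True
    have l: "length x = r" using x by (simp add: tidx_iff)
    define z where "z = bar m x"
    have z: "z \<in> tidx m r" using bar_tidx[OF x] by (simp add: z_def)
    have lz: "length z = r" using z by (simp add: tidx_iff)
    define a where "a = x ! (i - 1)"
    define b where "b = x ! i"
    have ab: "a \<in> {1..2*m}" "b \<in> {1..2*m}" using x i by (auto simp: tidx_iff a_def b_def)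
    have za: "z ! (i - 1) = phiv m a" "z ! i = phiv m b" using i l by (simp_all add: z_def nth_bar a_def b_def)
    have sz: "swp i z \<in> tidx m r" using z swp_tidx[OF i] by simp
    have sx: "swp i x \<in> tidx m r" using x swp_tidx[OF i] by simp
    have bs: "bar m (swp i x) = swp i z" using bar_swp[of i x m] i l by (simp add: z_def)
    have ne: "(phiv m a \<noteq> phiv m b) = (a \<noteq> b)" using ab phiv_eq by blast
    have sg: "(-1::K) ^ sgE m r (swp i z) = (-1) ^ sgE m r z * (-1) ^ ov m (phiv m a) * (-1) ^ ov m (phiv m b)"
      using sign_swp[OF lz i] za by simp
    have lhs: "mmul (tidx m r) (phiT m r) (mmul (tidx m r) (piT m r i) f) x y =
       (-1) ^ sgE m r z * (dT m (phiv m a) (phiv m b) * f z y +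
         (if a \<noteq> b then eps m (phiv m a) (phiv m b) * f (swp i z) y else 0))"
      using x z unfolding phiT_pull piT_pull[OF f i] z_def[symmetric] za ne by simp
    have rhs: "(msc cc (mmul (tidx m r) (phiT m r) f) - mmul (tidx m r) (piT m r i) (mmul (tidx m r) (phiT m r) f)) x y
       = cc * ((-1) ^ sgE m r z * f z y) - (dT m a b * ((-1) ^ sgE m r z * f z y) +
         (if a \<noteq> b then eps m a b * ((-1) ^ sgE m r (swp i z) * f (swp i z) y) else 0))"
    proof -
      have r1: "mmul (tidx m r) (piT m r i) (mmul (tidx m r) (phiT m r) f) x y = dT m a b * mmul (tidx m r) (phiT m r) f x y
          + (if a \<noteq> b then eps m a b * mmul (tidx m r) (phiT m r) f (swp i x) y else 0)"
        unfolding piT_pull[OF fl i] a_def b_def using x by simp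
      have r2: "mmul (tidx m r) (phiT m r) f x y = (-1) ^ sgE m r z * f z y"
        using x unfolding phiT_pull z_def by simp
      have r3: "mmul (tidx m r) (phiT m r) f (swp i x) y = (-1) ^ sgE m r (swp i z) * f (swp i z) y"
        using sx unfolding phiT_pull bs by simp
      show ?thesis by (simp add: msc_def r1 r2 r3)
    qed
    show ?thesis unfolding lhs rhs K1[OF ab] K2[OF ab] sg
      by (simp add: algebra_simps)
  qed
qed

lemma ncwf_goldman: "ncwf r p \<Longrightarrow> ncwf r (goldman p)"
  by (induction p) auto

lemma regL_lin: "regL r i \<in> lin (Wr r)"
  by (simp add: lin_def regL_def)

lemma mmul_msc_mid: "finite J \<Longrightarrow> X \<in> lin J \<Longrightarrow> mmul J (msc a (mid J)) X = msc a X"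
  by (simp add: mmul_msc_left)

lemma ss_sq: "(qq + inverse qq) * (qq + inverse qq) = cc * cc + 4"
  using qq_nz by (simp add: cc_def field_simps)

locale mc =
  fixes m r :: nat
  assumes r2: "2 \<le> r"
begin

abbreviation "I \<equiv> tidx m r"
abbreviation "T \<equiv> piT m r"
abbreviation "ph \<equiv> phiT m r"
abbreviation "ss \<equiv> qq + inverse qq"

lemma finI: "finite I" by (rule finite_tidx)
lemma ass: "mmul I (mmul I a b) c = mmul I a (mmul I b c)" by (rule mmul_assoc[OF finI])

definition tp :: "nat \<Rightarrow> ncpoly" where
  "tp i = Plus (Times (Scal (2 / ss)) (Gen i)) (Scal (- cc / ss))"

definition Th :: "nat \<Rightarrow> nat list lmap" where
  "Th i = nceval I T (tp i)"

lemma Th_eq: "Th i = msc (2 / ss) (T i) + msc (- cc / ss) (mid I)"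
  unfolding Th_def tp_def using piT_lin finI by (simp add: mmul_msc_mid)

lemma Th_lin[simp]: "Th i \<in> lin I"
  by (simp add: Th_eq piT_lin)

lemma T_Th: "T i = msc (ss / 2) (Th i) + msc (cc / 2) (mid I)"
proof -
  have g: "S \<noteq> 0 \<Longrightarrow> S / 2 * (2 / S * t + - C / S * d) + C / 2 * d = t" for S C t d :: K
    by (simp add: field_simps)
  show ?thesis unfolding Th_eq using g[OF ss_nz] by (simp add: fun_eq_iff msc_def)
qed

lemma Th_sq: assumes i: "1 \<le> i" "i < r" shows "mmul I (Th i) (Th i) = mid I"
proof -
  have q: "mmul I (T i) (T i) = msc cc (T i) + mid I"
    using piT_quad_op[OF i lin_mid[of "tidx m r"]] finI piT_lin by simp
  have g: "S \<noteq> 0 \<Longrightarrow> S * S = C * C + 4 \<Longrightarrow>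
      2 / S * (2 / S * (C * t + d) + - C / S * t) + - C / S * (2 / S * t + - C / S * d) = d" for S C t d :: K
  proof -
    assume S: "S \<noteq> 0" "S * S = C * C + 4"
    have "2 / S * (2 / S * (C * t + d) + - C / S * t) + - C / S * (2 / S * t + - C / S * d)
        = (C * C + 4) * d / (S * S)"
      using S(1) by (simp add: divide_simps) (simp add: algebra_simps)
    also have "\<dots> = d" using S by (metis divide_self mult_1 no_zero_divisors times_divide_eq_left)
    finally show ?thesis .
  qed
  have "mmul I (Th i) (Th i) = msc (2 / ss) (msc (2 / ss) (mmul I (T i) (T i)) + msc (- cc / ss) (T i))
      + msc (- cc / ss) (msc (2 / ss) (T i) + msc (- cc / ss) (mid I))"
    unfolding Th_eq using finI piT_lin by (simp add: mmul_add_left mmul_add_right mmul_msc_left mmul_msc_right)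
  also have "\<dots> = mid I"
    unfolding q using g[OF ss_nz ss_sq] by (simp add: fun_eq_iff msc_def)
  finally show ?thesis .
qed

lemma phi_T: assumes i: "1 \<le> i" "i < r"
  shows "mmul I ph (T i) = msc cc ph - mmul I (T i) ph"
  using phi_T_op[OF i lin_mid[of "tidx m r"]] finI piT_lin phiT_lin by simp

lemma phi_Th: assumes i: "1 \<le> i" "i < r"
  shows "mmul I ph (Th i) = - mmul I (Th i) ph"
proof -
  have g0: "S \<noteq> 0 \<Longrightarrow> 2 / S * (C * p - t) + - C / S * p = - (2 / S * t + - C / S * p)" for S C t p :: K
    by (simp add: field_simps)
  note g = g0[OF ss_nz]
  have a: "mmul I ph (Th i) = msc (2 / ss) (mmul I ph (T i)) + msc (- cc / ss) ph"
    unfolding Th_eq mmul_add_right mmul_msc_right using finI phiT_lin by simp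
  have b: "mmul I (Th i) ph = msc (2 / ss) (mmul I (T i) ph) + msc (- cc / ss) ph"
    unfolding Th_eq mmul_add_left mmul_msc_left using finI phiT_lin by simp
  show ?thesis unfolding a b phi_T[OF i] by (simp add: fun_eq_iff msc_def g diff_divide_distrib)
qed

lemma phi_sq: "mmul I ph ph = msc (sig r) (mid I)"
  using phi_sq_op[OF lin_mid[of "tidx m r"]] finI phiT_lin by simp

lemma sig_sq: "sig r * sig r = 1"
  by (simp add: power_add[symmetric] power_mult_distrib[symmetric] mult_2[symmetric] power_mult)

lemma gen_neg: "S \<noteq> 0 \<Longrightarrow> msc (2 / S) (msc C M + msc (-1) R) + msc (- C / S) M = - (msc (2 / S) R + msc (- C / S) M)"
  for M R :: "'i lmap"
  by (simp add: fun_eq_iff msc_def field_simps)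

lemma nceval_goldman_tp:
  assumes J: "finite J" and rl: "rho i \<in> lin J"
  shows "nceval J rho (goldman (tp i)) = - nceval J rho (tp i)"
proof -
  have e1: "mmul J (msc (-1) (mid J)) (rho i) = msc (-1) (rho i)" by (rule mmul_msc_mid[OF J rl])
  have e2: "mmul J (msc (2 / ss) (mid J)) (msc cc (mid J) + msc (-1) (rho i)) = msc (2 / ss) (msc cc (mid J) + msc (-1) (rho i))"
    by (rule mmul_msc_mid[OF J]) (simp add: rl)
  have e3: "mmul J (msc (2 / ss) (mid J)) (rho i) = msc (2 / ss) (rho i)" by (rule mmul_msc_mid[OF J rl])
  show ?thesis unfolding tp_def goldman.simps nceval.simps e1 e2 e3 by (rule gen_neg[OF ss_nz])
qed

lemma ncwf_tp: "1 \<le> i \<Longrightarrow> i < r \<Longrightarrow> ncwf r (tp i)"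
  by (simp add: tp_def)

definition fixedp :: "ncpoly \<Rightarrow> bool" where
  "fixedp p = (ncwf r p \<and> nceval (Wr r) (regL r) (goldman p) = nceval (Wr r) (regL r) p)"

lemma Cq_alt: "Cq m r = {nceval I T p | p. fixedp p}"
  by (simp add: Cq_def fixedp_def)

lemma one_lt: "1 < r" using r2 by simp

lemma regL_tp: "i < r \<Longrightarrow> nceval (Wr r) (regL r) (goldman (tp i)) = - nceval (Wr r) (regL r) (tp i)"
  by (rule nceval_goldman_tp[OF finite_Wr regL_lin])

lemma fixed_P: assumes "1 \<le> i" "i < r" shows "fixedp (Times (tp i) (tp 1))"
  unfolding fixedp_def using assms one_lt
  by (simp add: ncwf_tp regL_tp mmul_uminus_left mmul_uminus_right)

lemma fixed_conj: assumes "fixedp p" shows "fixedp (Times (Times (tp 1) p) (tp 1))"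
  using assms one_lt unfolding fixedp_def
  by (simp add: ncwf_tp regL_tp mmul_uminus_left mmul_uminus_right)

lemma nceval_lin': "ncwf r p \<Longrightarrow> nceval I T p \<in> lin I"
  by (rule hrep.nceval_lin[OF hrep_piT])

lemma goldman_T: "1 \<le> i \<Longrightarrow> i < r \<Longrightarrow> nceval I T (goldman (Gen i)) = msc cc (mid I) - T i"
  using finI piT_lin by (simp add: mmul_msc_mid) (simp add: msc_uminus)

lemma phi_goldman: "ncwf r p \<Longrightarrow> mmul I ph (nceval I T p) = mmul I (nceval I T (goldman p)) ph"
proof (induction p)
  case (Gen i)
  then have i: "1 \<le> i" "i < r" by auto
  show ?case unfolding goldman_T[OF i] nceval.simps(1) phi_T[OF i] mmul_diff_left mmul_msc_left
    using finI phiT_lin by simp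
next
  case (Scal c)
  then show ?case using finI phiT_lin by (simp add: mmul_msc_left mmul_msc_right)
next
  case (Plus a b)
  then show ?case unfolding nceval.simps mmul_add_left mmul_add_right goldman.simps by simp
next
  case (Times a b)
  then have ia: "mmul I ph (nceval I T a) = mmul I (nceval I T (goldman a)) ph"
    and ib: "mmul I ph (nceval I T b) = mmul I (nceval I T (goldman b)) ph" by auto
  have "mmul I ph (mmul I (nceval I T a) (nceval I T b)) = mmul I (mmul I ph (nceval I T a)) (nceval I T b)"
    by (simp add: ass)
  also have "\<dots> = mmul I (nceval I T (goldman a)) (mmul I ph (nceval I T b))" by (simp add: ia ass)
  also have "\<dots> = mmul I (mmul I (nceval I T (goldman a)) (nceval I T (goldman b))) ph" by (simp add: ib ass)
  finally show ?case by simp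
qed

lemma phi_C: "fixedp p \<Longrightarrow> mmul I ph (nceval I T p) = mmul I (nceval I T p) ph"
proof -
  assume f: "fixedp p"
  then have "nceval I T (goldman p) = nceval I T p"
    unfolding fixedp_def by (intro hrep.factor[OF hrep_piT]) (auto simp: ncwf_goldman)
  then show ?thesis using phi_goldman f by (simp add: fixedp_def)
qed

lemma comm_gen:
  assumes X: "X \<in> lin I" and c: "\<And>i. 1 \<le> i \<Longrightarrow> i < r \<Longrightarrow> mmul I X (T i) = mmul I (T i) X"
  shows "ncwf r p \<Longrightarrow> mmul I X (nceval I T p) = mmul I (nceval I T p) X"
proof (induction p)
  case (Gen i)
  then show ?case using c by simp
next
  case (Scal a)
  then show ?case using X finI by (simp add: mmul_msc_left mmul_msc_right)
next
  case (Plus a b)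
  then show ?case unfolding nceval.simps mmul_add_left mmul_add_right goldman.simps by simp
next
  case (Times a b)
  then have ia: "mmul I X (nceval I T a) = mmul I (nceval I T a) X"
    and ib: "mmul I X (nceval I T b) = mmul I (nceval I T b) X" by auto
  have "mmul I X (mmul I (nceval I T a) (nceval I T b)) = mmul I (mmul I X (nceval I T a)) (nceval I T b)"
    by (simp add: ass)
  also have "\<dots> = mmul I (nceval I T a) (mmul I X (nceval I T b))" by (simp add: ia ass)
  also have "\<dots> = mmul I (mmul I (nceval I T a) (nceval I T b)) X" by (simp add: ib ass)
  finally show ?case by simp
qed

lemma B_iff: "X \<in> Bq m r \<longleftrightarrow> X \<in> lin I \<and> (\<forall>i. 1 \<le> i \<and> i < r \<longrightarrow> mmul I X (T i) = mmul I (T i) X)"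
proof
  assume "X \<in> Bq m r"
  then have X: "X \<in> lin I" and c: "\<And>a. a \<in> Aq m r \<Longrightarrow> mmul I X a = mmul I a X"
    by (auto simp: Bq_def centralizer_def)
  have "T i \<in> Aq m r" if "1 \<le> i" "i < r" for i
    unfolding Aq_def using that by (intro CollectI exI[of _ "Gen i"]) simp
  then show "X \<in> lin I \<and> (\<forall>i. 1 \<le> i \<and> i < r \<longrightarrow> mmul I X (T i) = mmul I (T i) X)" using X c by auto
next
  assume "X \<in> lin I \<and> (\<forall>i. 1 \<le> i \<and> i < r \<longrightarrow> mmul I X (T i) = mmul I (T i) X)"
  then show "X \<in> Bq m r"
    using comm_gen[of X] by (auto simp: Bq_def centralizer_def Aq_def)
qed

lemma comm_T_of_Th:
  assumes "X \<in> lin I" "mmul I X (Th i) = mmul I (Th i) X"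
  shows "mmul I X (T i) = mmul I (T i) X"
  unfolding T_Th using assms finI by (simp add: mmul_add_left mmul_add_right mmul_msc_left mmul_msc_right)

lemma D_iff: "X \<in> Dq m r \<longleftrightarrow> X \<in> lin I \<and> (\<forall>p. fixedp p \<longrightarrow> mmul I X (nceval I T p) = mmul I (nceval I T p) X)"
  by (auto simp: Dq_def centralizer_def Cq_alt)

lemma C_sub_A: "fixedp p \<Longrightarrow> ncwf r p" by (simp add: fixedp_def)

lemma B_sub_D: "X \<in> Bq m r \<Longrightarrow> X \<in> Dq m r"
  unfolding D_iff using comm_gen B_iff C_sub_A by blast

lemma Bphi_D: assumes "X \<in> Bq m r" shows "mmul I X ph \<in> Dq m r"
proof -
  have X: "X \<in> lin I" using assms B_iff by blast
  have "mmul I (mmul I X ph) (nceval I T p) = mmul I (nceval I T p) (mmul I X ph)" if "fixedp p" for p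
  proof -
    have "mmul I X (nceval I T p) = mmul I (nceval I T p) X"
      using comm_gen[OF X] assms B_iff C_sub_A[OF that] by blast
    then show ?thesis using phi_C[OF that] by (simp add: ass) (simp add: ass[symmetric])
  qed
  then show ?thesis unfolding D_iff using X phiT_lin by simp
qed

abbreviation "th \<equiv> Th (Suc 0)"

lemma th_sq: "mmul I th th = mid I" using Th_sq[of "Suc 0"] one_lt by simp
lemma th_lin: "th \<in> lin I" by simp
lemma phi_th: "mmul I ph th = - mmul I th ph" using phi_Th[of "Suc 0"] one_lt by simp

lemma th_th_right: "X \<in> lin I \<Longrightarrow> mmul I (mmul I X th) th = X"
  by (simp add: ass th_sq finI)
lemma th_th_left: "X \<in> lin I \<Longrightarrow> mmul I th (mmul I th X) = X"
  by (simp add: ass[symmetric] th_sq finI)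

lemma B_comm_Th: assumes "X \<in> Bq m r" "1 \<le> i" "i < r"
  shows "mmul I X (Th i) = mmul I (Th i) X"
proof -
  have X: "X \<in> lin I" and c: "mmul I X (T i) = mmul I (T i) X" using assms B_iff by auto
  show ?thesis unfolding Th_eq mmul_add_left mmul_add_right mmul_msc_left mmul_msc_right c
    using X finI by simp
qed

lemma y_eval: "nceval I T (Times (tp i) (tp 1)) = mmul I (Th i) th"
  by (simp add: Th_def)

lemma conj_eval: "nceval I T (Times (Times (tp 1) p) (tp 1)) = mmul I (mmul I th (nceval I T p)) th"
  by (simp add: Th_def)

lemma D_comm: "d \<in> Dq m r \<Longrightarrow> fixedp p \<Longrightarrow> mmul I d (nceval I T p) = mmul I (nceval I T p) d"
  using D_iff by blast

lemma D_lin: "d \<in> Dq m r \<Longrightarrow> d \<in> lin I"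
  using D_iff by blast

lemma Th_split: "Th i = mmul I (mmul I (Th i) th) th"
  using th_th_right[of "Th i"] by simp

lemma in_B_crit:
  assumes X: "X \<in> lin I" and ct: "mmul I X th = mmul I th X"
    and cy: "\<And>i. 1 \<le> i \<Longrightarrow> i < r \<Longrightarrow> mmul I X (mmul I (Th i) th) = mmul I (mmul I (Th i) th) X"
  shows "X \<in> Bq m r"
proof -
  have "mmul I X (Th i) = mmul I (Th i) X" if i: "1 \<le> i" "i < r" for i
  proof -
    define y where "y = mmul I (Th i) th"
    have "mmul I X (Th i) = mmul I X (mmul I y th)" using Th_split[of i] by (simp add: y_def)
    also have "\<dots> = mmul I (mmul I X y) th" by (simp add: ass)
    also have "\<dots> = mmul I (mmul I y X) th" using cy[OF i] by (simp add: y_def)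
    also have "\<dots> = mmul I y (mmul I X th)" by (simp add: ass)
    also have "\<dots> = mmul I y (mmul I th X)" by (simp add: ct)
    also have "\<dots> = mmul I (Th i) X" using Th_split[of i] by (simp add: ass[symmetric] y_def)
    finally show ?thesis .
  qed
  then show ?thesis using B_iff X comm_T_of_Th by blast
qed

lemma t_comm:
  assumes d: "d \<in> Dq m r" and p: "fixedp p"
  shows "mmul I (mmul I th (mmul I d th)) (nceval I T p) = mmul I (nceval I T p) (mmul I th (mmul I d th))"
proof -
  define X where "X = nceval I T p"
  define X' where "X' = mmul I th (mmul I X th)"
  have Xl: "X \<in> lin I" using p nceval_lin' C_sub_A by (simp add: X_def)
  have dX': "mmul I d X' = mmul I X' d"
    using D_comm[OF d fixed_conj[OF p]] unfolding conj_eval X'_def X_def by (simp add: ass)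
  have thX: "mmul I th X = mmul I X' th"
    by (simp add: X'_def ass th_sq finI Xl)
  have "mmul I (mmul I th (mmul I d th)) X = mmul I th (mmul I d (mmul I th X))" by (simp add: ass)
  also have "\<dots> = mmul I th (mmul I (mmul I d X') th)" by (simp add: thX ass)
  also have "\<dots> = mmul I th (mmul I (mmul I X' d) th)" by (simp add: dX')
  also have "\<dots> = mmul I (mmul I th (mmul I th X)) (mmul I th (mmul I d th))"
    by (simp add: X'_def ass)
  also have "\<dots> = mmul I X (mmul I th (mmul I d th))" by (simp add: th_th_left Xl)
  finally show ?thesis by (simp add: X_def)
qed

lemmas lsimps = mmul_add_left mmul_add_right mmul_diff_left mmul_diff_right
  mmul_msc_left mmul_msc_right mmul_uminus_left mmul_uminus_right

lemma y_fixed: "1 \<le> i \<Longrightarrow> i < r \<Longrightarrow> fixedp (Times (tp i) (tp 1))"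
  by (rule fixed_P)

lemma phi_y: "1 \<le> i \<Longrightarrow> i < r \<Longrightarrow> mmul I ph (mmul I (Th i) th) = mmul I (mmul I (Th i) th) ph"
  using phi_C[OF y_fixed] y_eval by metis

lemma d_y: "d \<in> Dq m r \<Longrightarrow> 1 \<le> i \<Longrightarrow> i < r \<Longrightarrow> mmul I d (mmul I (Th i) th) = mmul I (mmul I (Th i) th) d"
  using D_comm[OF _ y_fixed] y_eval by metis

lemma t_y: "d \<in> Dq m r \<Longrightarrow> 1 \<le> i \<Longrightarrow> i < r \<Longrightarrow>
    mmul I (mmul I th (mmul I d th)) (mmul I (Th i) th) = mmul I (mmul I (Th i) th) (mmul I th (mmul I d th))"
  using t_comm[OF _ y_fixed] y_eval by metis

lemma decomp:
  assumes d: "d \<in> Dq m r"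
  shows "\<exists>b1 b2. b1 \<in> Bq m r \<and> b2 \<in> Bq m r \<and> d = b1 + mmul I b2 ph"
proof -
  have dl: "d \<in> lin I" using D_lin[OF d] .
  define t where "t = mmul I th (mmul I d th)"
  have tl: "t \<in> lin I" using dl by (simp add: t_def)
  define b1 where "b1 = msc (1/2) (d + t)"
  define e where "e = msc (1/2) (d - t)"
  define b2 where "b2 = msc (sig r) (mmul I e ph)"
  have el: "e \<in> lin I" and b1l: "b1 \<in> lin I" using dl tl by (simp_all add: e_def b1_def)
  have b2l: "b2 \<in> lin I" using el phiT_lin by (simp add: b2_def)
  have tht: "mmul I th t = mmul I d th" using dl by (simp add: t_def th_th_left)
  have tth: "mmul I t th = mmul I th d" using dl by (simp add: t_def ass th_sq finI)
  have b1th: "mmul I b1 th = mmul I th b1"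
    unfolding b1_def lsimps tht tth by (simp add: add.commute)
  have eth: "mmul I e th = - mmul I th e"
    unfolding e_def lsimps tht tth by (simp add: fun_eq_iff msc_def algebra_simps)
  have b1y: "mmul I b1 (mmul I (Th i) th) = mmul I (mmul I (Th i) th) b1" if i: "1 \<le> i" "i < r" for i
    unfolding b1_def lsimps using d_y[OF d i] t_y[OF d i] by (simp add: t_def)
  have ey: "mmul I e (mmul I (Th i) th) = mmul I (mmul I (Th i) th) e" if i: "1 \<le> i" "i < r" for i
    unfolding e_def lsimps using d_y[OF d i] t_y[OF d i] by (simp add: t_def)
  have B1: "b1 \<in> Bq m r" using in_B_crit[OF b1l b1th b1y] by blast
  have b2th: "mmul I b2 th = mmul I th b2"
  proof -
    have "mmul I b2 th = msc (sig r) (mmul I e (mmul I ph th))" by (simp add: b2_def lsimps ass)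
    also have "\<dots> = msc (sig r) (- mmul I (mmul I e th) ph)" by (simp add: phi_th lsimps ass)
    also have "\<dots> = msc (sig r) (mmul I th (mmul I e ph))" by (simp add: eth lsimps ass)
    also have "\<dots> = mmul I th b2" by (simp add: b2_def lsimps)
    finally show ?thesis .
  qed
  have b2y: "mmul I b2 (mmul I (Th i) th) = mmul I (mmul I (Th i) th) b2" if i: "1 \<le> i" "i < r" for i
  proof -
    define y where "y = mmul I (Th i) th"
    have "mmul I b2 y = msc (sig r) (mmul I e (mmul I ph y))" by (simp add: b2_def lsimps ass)
    also have "\<dots> = msc (sig r) (mmul I (mmul I e y) ph)" using phi_y[OF i] by (simp add: y_def ass)
    also have "\<dots> = msc (sig r) (mmul I y (mmul I e ph))" using ey[OF i] by (simp add: y_def ass)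
    also have "\<dots> = mmul I y b2" by (simp add: b2_def lsimps)
    finally show ?thesis by (simp add: y_def)
  qed
  have B2: "b2 \<in> Bq m r" using in_B_crit[OF b2l b2th b2y] by blast
  have "mmul I b2 ph = msc (sig r * sig r) e"
    using el finI by (simp add: b2_def lsimps ass phi_sq)
  then have "mmul I b2 ph = e" by (simp add: sig_sq)
  then have "d = b1 + mmul I b2 ph" by (simp add: b1_def e_def fun_eq_iff msc_def field_simps)
  then show ?thesis using B1 B2 by blast
qed

lemma inj0:
  assumes B1: "b1 \<in> Bq m r" and B2: "b2 \<in> Bq m r" and z: "b1 + mmul I b2 ph = 0"
  shows "b1 = 0 \<and> b2 = 0"
proof -
  have b1l: "b1 \<in> lin I" and b2l: "b2 \<in> lin I" using B1 B2 B_iff by auto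
  have c1: "mmul I b1 th = mmul I th b1" using B_comm_Th[OF B1, of "Suc 0"] one_lt by simp
  have c2: "mmul I b2 th = mmul I th b2" using B_comm_Th[OF B2, of "Suc 0"] one_lt by simp
  have e: "b1 = - mmul I b2 ph" using z by (simp add: eq_neg_iff_add_eq_0)
  have "mmul I th b1 = mmul I b1 th" using c1 by simp
  also have "\<dots> = - mmul I b2 (mmul I ph th)" by (simp add: e lsimps ass)
  also have "\<dots> = mmul I th (mmul I b2 ph)" by (simp add: phi_th lsimps ass[symmetric] c2)
  also have "\<dots> = - mmul I th b1" by (simp add: e lsimps)
  finally have "mmul I th b1 = - mmul I th b1" .
  then have "mmul I th b1 = 0" by (simp add: fun_eq_iff)
  then have "mmul I th (mmul I th b1) = 0" by simp
  then have b1z: "b1 = 0" using th_th_left[OF b1l] by simp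
  then have "mmul I b2 ph = 0" using z by simp
  then have "mmul I (mmul I b2 ph) ph = 0" by simp
  then have "msc (sig r) b2 = 0" using b2l finI by (simp add: ass phi_sq lsimps)
  then have "msc (sig r * sig r) b2 = 0" by (metis msc_msc msc_zero2)
  then have "b2 = 0" by (simp add: sig_sq)
  then show ?thesis using b1z by simp
qed

end

context mc begin

lemma B_zero: "0 \<in> Bq m r" by (simp add: B_iff)
lemma B_add: "a \<in> Bq m r \<Longrightarrow> b \<in> Bq m r \<Longrightarrow> a + b \<in> Bq m r"
  by (simp add: B_iff lsimps)
lemma B_diff: "a \<in> Bq m r \<Longrightarrow> b \<in> Bq m r \<Longrightarrow> a - b \<in> Bq m r"
  by (simp add: B_iff lsimps)
lemma B_msc: "a \<in> Bq m r \<Longrightarrow> msc c a \<in> Bq m r"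
  by (simp add: B_iff lsimps)
lemma B_lin: "a \<in> Bq m r \<Longrightarrow> a \<in> lin I"
  by (simp add: B_iff)

lemma D_add: "a \<in> Dq m r \<Longrightarrow> b \<in> Dq m r \<Longrightarrow> a + b \<in> Dq m r"
  by (simp add: D_iff lsimps)

lemma Phi_in_D: "x \<in> cp_carrier Z2 (Bq m r) \<Longrightarrow> Phi m r x \<in> Dq m r"
proof -
  assume "x \<in> cp_carrier Z2 (Bq m r)"
  then have "x 1 \<in> Bq m r" "x (-1) \<in> Bq m r" by (auto simp: cp_carrier_def Z2_def)
  then show ?thesis unfolding Phi_def by (intro D_add[OF B_sub_D Bphi_D])
qed

lemma Phi_inj: "inj_on (Phi m r) (cp_carrier Z2 (Bq m r))"
proof (rule inj_onI)
  fix x y assume x: "x \<in> cp_carrier Z2 (Bq m r)" and y: "y \<in> cp_carrier Z2 (Bq m r)" and e: "Phi m r x = Phi m r y"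
  have xb: "x 1 \<in> Bq m r" "x (-1) \<in> Bq m r" and yb: "y 1 \<in> Bq m r" "y (-1) \<in> Bq m r"
    using x y by (auto simp: cp_carrier_def Z2_def)
  have "(x 1 - y 1) + mmul I (x (-1) - y (-1)) ph = 0"
    using e unfolding Phi_def mmul_diff_left by (simp add: algebra_simps)
  then have "x 1 - y 1 = 0 \<and> x (-1) - y (-1) = 0"
    by (intro inj0 B_diff xb yb)
  then have "x s = y s" for s
    using x y by (cases "s = 1"; cases "s = -1") (auto simp: cp_carrier_def Z2_def)
  then show "x = y" by auto
qed

lemma Phi_surj: "d \<in> Dq m r \<Longrightarrow> d \<in> Phi m r ` cp_carrier Z2 (Bq m r)"
proof -
  assume d: "d \<in> Dq m r"
  obtain b1 b2 where b: "b1 \<in> Bq m r" "b2 \<in> Bq m r" "d = b1 + mmul I b2 ph"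
    using decomp[OF d] by blast
  define x where "x = (\<lambda>s::int. if s = 1 then b1 else if s = -1 then b2 else 0)"
  have "x \<in> cp_carrier Z2 (Bq m r)" using b by (auto simp: x_def cp_carrier_def Z2_def)
  moreover have "Phi m r x = d" using b by (simp add: x_def Phi_def)
  ultimately show ?thesis by blast
qed

lemma bij: "bij_betw (Phi m r) (cp_carrier Z2 (Bq m r)) (Dq m r)"
  unfolding bij_betw_def using Phi_inj Phi_in_D Phi_surj by blast

lemma sum_Z2: "(\<Sum>s\<in>Z2. f s) = f 1 + f (-1)"
  by (simp add: Z2_def)

lemma cp_mul_1: "cp_mul Z2 (*) I (psi1 m r) (alpha1 m r) x y 1 =
   mmul I (mmul I (x 1) (y 1)) (mid I) + mmul I (mmul I (x (-1)) (omega m r (y (-1)))) (msc (sig r) (mid I))"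
  unfolding cp_mul_def sum_Z2 by (simp add: psi1_def alpha1_def)

lemma cp_mul_m1: "cp_mul Z2 (*) I (psi1 m r) (alpha1 m r) x y (-1) =
   mmul I (mmul I (x 1) (y (-1))) (mid I) + mmul I (mmul I (x (-1)) (omega m r (y 1))) (mid I)"
  unfolding cp_mul_def sum_Z2 by (simp add: psi1_def alpha1_def)

lemma Phi_mult:
  assumes x: "x \<in> cp_carrier Z2 (Bq m r)" and y: "y \<in> cp_carrier Z2 (Bq m r)"
  shows "Phi m r (cp_mul Z2 (*) I (psi1 m r) (alpha1 m r) x y) = mmul I (Phi m r x) (Phi m r y)"
proof -
  have l: "x 1 \<in> lin I" "x (-1) \<in> lin I" "y 1 \<in> lin I" "y (-1) \<in> lin I"
    using x y by (auto simp: cp_carrier_def Z2_def B_lin)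
  have pl: "ph \<in> lin I" by (rule phiT_lin)
  have pp: "mmul I ph (mmul I ph Z) = msc (sig r) Z" if "Z \<in> lin I" for Z
    using that finI by (simp add: ass[symmetric] phi_sq lsimps)
  have ss: "(-1::K) ^ (r * (r - Suc 0) div 2) * (-1) ^ (r * (r - Suc 0) div 2) = 1"
    using sig_sq by simp
  show ?thesis
    unfolding Phi_def cp_mul_1 cp_mul_m1 omega_def
    using l pl finI by (simp add: lsimps ass pp ss add_ac phi_sq)
qed

lemma vs: "vector_space (msc :: K \<Rightarrow> nat list lmap \<Rightarrow> nat list lmap)"
  by unfold_locales (simp_all add: msc_add msc_add2)

lemma dim_eq:
  "vector_space.dim (msc :: K \<Rightarrow> nat list lmap \<Rightarrow> nat list lmap) (Dq m r)
     = 2 * vector_space.dim (msc :: K \<Rightarrow> nat list lmap \<Rightarrow> nat list lmap) (Bq m r)"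
proof -
  interpret V: vector_space "msc :: K \<Rightarrow> nat list lmap \<Rightarrow> nat list lmap" by (rule vs)
  define F where "F = (\<lambda>b. mmul I b ph)"
  obtain bs where bs: "bs \<subseteq> Bq m r" "V.independent bs" "Bq m r \<subseteq> V.span bs" "card bs = V.dim (Bq m r)"
    using V.basis_exists by blast
  have subB: "V.subspace (Bq m r)"
    unfolding V.subspace_def using B_zero B_add B_msc by blast
  have spanB: "V.span bs \<subseteq> Bq m r" by (rule V.span_minimal[OF bs(1) subB])
  have Fsum: "F (\<Sum>v\<in>t. msc (u v) v) = (\<Sum>v\<in>t. msc (u v) (F v))" for t u
    unfolding F_def by (simp add: mmul_sum_left mmul_msc_left)
  have Fspan: "F b \<in> V.span (F ` bs)" if "b \<in> V.span bs" for b
  proof -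
    have "b \<in> {(\<Sum>a\<in>t. msc (u a) a) | t u. finite t \<and> t \<subseteq> bs}"
      using that by (simp only: V.span_explicit)
    then obtain t u where t: "finite t" "t \<subseteq> bs" "b = (\<Sum>v\<in>t. msc (u v) v)"
      by blast
    have "msc (u v) (F v) \<in> V.span (F ` bs)" if "v \<in> t" for v
      using that t(2) by (intro V.span_scale V.span_base) blast
    then have "(\<Sum>v\<in>t. msc (u v) (F v)) \<in> V.span (F ` bs)" by (rule V.span_sum)
    then show ?thesis by (simp only: t(3) Fsum)
  qed
  have Finj: "inj_on F (Bq m r)"
  proof (rule inj_onI)
    fix a b assume a: "a \<in> Bq m r" and b: "b \<in> Bq m r" and e: "F a = F b"
    have "0 + mmul I (a - b) ph = 0" using e by (simp add: F_def mmul_diff_left)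
    then have "a - b = 0" using inj0[OF B_zero B_diff[OF a b]] by blast
    then show "a = b" by simp
  qed
  have FB: "F b \<in> Dq m r" if "b \<in> Bq m r" for b using Bphi_D[OF that] by (simp add: F_def)
  have sub: "bs \<union> F ` bs \<subseteq> Dq m r" using bs(1) B_sub_D FB by blast
  have spanD: "Dq m r \<subseteq> V.span (bs \<union> F ` bs)"
  proof
    fix d assume d: "d \<in> Dq m r"
    obtain b1 b2 where b: "b1 \<in> Bq m r" "b2 \<in> Bq m r" "d = b1 + F b2"
      using decomp[OF d] by (auto simp: F_def)
    have "b1 \<in> V.span (bs \<union> F ` bs)" using b(1) bs(3) V.span_mono[of bs "bs \<union> F ` bs"] by blast
    moreover have "F b2 \<in> V.span (bs \<union> F ` bs)"
      using Fspan[of b2] b(2) bs(3) V.span_mono[of "F ` bs" "bs \<union> F ` bs"] by blast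
    ultimately show "d \<in> V.span (bs \<union> F ` bs)" using b(3) V.span_add by simp
  qed
  have indep: "V.independent (bs \<union> F ` bs)"
    unfolding V.independent_explicit_module
  proof (intro allI impI)
    fix t u v
    assume t: "finite t" "t \<subseteq> bs \<union> F ` bs" and s0: "(\<Sum>v\<in>t. msc (u v) v) = 0" and v: "v \<in> t"
    define t1 where "t1 = t \<inter> bs"
    define t2 where "t2 = t - bs"
    define t2' where "t2' = {w \<in> bs. F w \<in> t2}"
    have injbs: "inj_on F bs" using Finj bs(1) inj_on_subset by blast
    have t2img: "F ` t2' = t2" using t by (auto simp: t2'_def t2_def)
    have injt2: "inj_on F t2'" using injbs by (rule inj_on_subset) (auto simp: t2'_def)
    have ft2': "finite t2'" using finite_imageD[of F t2'] t2img injt2 t(1) by (simp add: t2_def)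
    have split: "(\<Sum>v\<in>t. msc (u v) v) = (\<Sum>v\<in>t1. msc (u v) v) + (\<Sum>v\<in>t2. msc (u v) v)"
      unfolding t1_def t2_def by (rule sum.Int_Diff[OF t(1)])
    have s2: "(\<Sum>v\<in>t2. msc (u v) v) = F (\<Sum>w\<in>t2'. msc (u (F w)) w)"
      unfolding Fsum t2img[symmetric] using sum.reindex[OF injt2] by (simp add: o_def)
    have X1: "(\<Sum>v\<in>t1. msc (u v) v) \<in> Bq m r"
      using spanB by (intro subsetD[OF spanB] V.span_sum V.span_scale V.span_base) (auto simp: t1_def)
    have X2: "(\<Sum>w\<in>t2'. msc (u (F w)) w) \<in> Bq m r"
      by (intro subsetD[OF spanB] V.span_sum V.span_scale V.span_base) (auto simp: t2'_def)
    have z: "(\<Sum>v\<in>t1. msc (u v) v) = 0 \<and> (\<Sum>w\<in>t2'. msc (u (F w)) w) = 0"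
      using inj0[OF X1 X2] s0 split s2 by (simp add: F_def)
    show "u v = 0"
    proof (cases "v \<in> bs")
      case True
      then have "v \<in> t1" using v by (simp add: t1_def)
      then show ?thesis using V.independentD[OF bs(2), of t1 u v] z t(1) by (auto simp: t1_def)
    next
      case False
      then have "v \<in> t2" using v by (simp add: t2_def)
      then obtain w where w: "w \<in> t2'" "v = F w" using t2img by blast
      have "u (F w) = 0"
        using V.independentD[OF bs(2) ft2', of "\<lambda>w. u (F w)" w] z w by (auto simp: t2'_def)
      then show ?thesis using w by simp
    qed
  qed
  have disj: "bs \<inter> F ` bs = {}"
  proof (rule ccontr)
    assume "bs \<inter> F ` bs \<noteq> {}"
    then obtain v w where vw: "v \<in> bs" "w \<in> bs" "v = F w" by blast
    have "v + mmul I (- w) ph = 0" using vw by (simp add: F_def mmul_uminus_left)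
    then have "v = 0" using inj0[of v "- w"] vw bs(1) B_msc[of w "-1"] by (auto simp: msc_uminus)
    then show False using vw(1) bs(2) V.dependent_zero by blast
  qed
  have injbs: "inj_on F bs" using Finj bs(1) inj_on_subset by blast
  have card: "card (bs \<union> F ` bs) = 2 * card bs"
  proof (cases "finite bs")
    case True
    then show ?thesis using card_Un_disjoint[OF True finite_imageI[OF True] disj] card_image[OF injbs] by simp
  next
    case False
    then show ?thesis by simp
  qed
  have "V.dim (Dq m r) = 2 * card bs"
    by (rule V.dim_unique[OF sub spanD indep card])
  then show ?thesis using bs(4) by simp
qed

end

theorem theorem5p6:
  fixes m r :: nat
  assumes "2 \<le> r" and "0 < m"
  shows "bij_betw (Phi m r) (cp_carrier Z2 (Bq m r)) (Dq m r)
    \<and> (\<forall>x\<in>cp_carrier Z2 (Bq m r). \<forall>y\<in>cp_carrier Z2 (Bq m r).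
          Phi m r (cp_mul Z2 (*) (tidx m r) (psi1 m r) (alpha1 m r) x y)
            = mmul (tidx m r) (Phi m r x) (Phi m r y))
    \<and> (\<forall>x\<in>cp_carrier Z2 (Bq m r). \<forall>y\<in>cp_carrier Z2 (Bq m r).
          Phi m r (x + y) = Phi m r x + Phi m r y)
    \<and> (\<forall>c. \<forall>x\<in>cp_carrier Z2 (Bq m r).
          Phi m r (\<lambda>s. msc c (x s)) = msc c (Phi m r x))
    \<and> Phi m r (\<lambda>s. if s = 1 then mid (tidx m r) else 0) = mid (tidx m r)
    \<and> vector_space.dim (msc :: K \<Rightarrow> nat list lmap \<Rightarrow> nat list lmap) (Dq m r)
        = 2 * vector_space.dim (msc :: K \<Rightarrow> nat list lmap \<Rightarrow> nat list lmap) (Bq m r)"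
proof -
  interpret mc m r using assms(1) by unfold_locales
  have add: "Phi m r (x + y) = Phi m r x + Phi m r y" for x y :: "int \<Rightarrow> nat list lmap"
    unfolding Phi_def plus_fun_apply mmul_add_left by (simp add: add_ac)
  have scal: "Phi m r (\<lambda>s. msc c (x s)) = msc c (Phi m r x)" for c x
    unfolding Phi_def mmul_msc_left msc_add by simp
  have unit: "Phi m r (\<lambda>s. if s = 1 then mid (tidx m r) else 0) = mid (tidx m r)"
    unfolding Phi_def by simp
  show ?thesis using bij Phi_mult dim_eq add scal unit by blast
qed

end
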